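(* Let $q\in(0,2]$, $c\ge1$, and let $f,g:\mathbb{R}\to\mathbb{R}$ be continuous nondecreasing with $f$ positive. Let $a\in\mathbb{R}$, $R>0$, and let $\varphi$ be a solution on $[0,R)$ of $$\varphi''+\frac{c-1}{r}\varphi'=f(\varphi)+g(\varphi)|\varphi'|^q,\qquad\varphi(0)=a,\qquad\varphi'(0)=0 .$$ Then for every $r\in[0,R)$: $$r\ge\begin{cases}\displaystyle\frac{1}{2^{2/(2-q)}}\int_a^{\varphi(r)}\frac{dt}{\left(\int_a^tf(s)\,ds\right)^{1/2}+\left(\int_a^tg^+(s)\,ds\right)^{1/(2-q)}} & q<2,\\ \displaystyle\int_a^{\varphi(r)}\frac{dt}{\left(2\int_a^te^{2\int_s^tg^+(\rho)\,d\rho}f(s)\,ds\right)^{1/2}} & q=2;\end{cases}$$ if moreover $g(a)\ge0$, $$r\le\begin{cases}\displaystyle2\left(\frac{c}{2-q}\right)^{1/(2-q)}\int_a^{\varphi(r)}\frac{dt}{\left(\int_a^tf(s)\,ds\right)^{1/2}+\left(\int_a^tg^+(s)\,ds\right)^{1/(2-q)}} & q<2,\\ \displaystyle\sqrt{\frac c2}\int_a^{\varphi(r)}\frac{dt}{\left(\int_a^te^{\frac2c\int_s^tg^+(\tau)\,d\tau}f(s)\,ds\right)^{1/2}} & q=2.\end{cases}$$ Furthermore, for every $r\in(0,R)$, $$r\le\frac{c^{1/q}}{\sqrt q}\int_a^{\varphi(r)}\frac{dt}{\left(\int_a^te^{-2\int_s^t\left(\frac{g^-(\tau)}{f(\tau)}\right)^{2/q}f(\tau)\,d\tau}f(s)\,ds\right)^{1/2}},$$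 and, if $g(t)\le0$ for all $t\in\mathbb{R}$, $$r\ge\frac{1}{\sqrt2}\int_a^{\varphi(r)}\frac{dt}{\left(\int_a^te^{-2\int_s^t\left(\frac{g^-(\tau)}{f(\tau)}\right)^{2/q}f(\tau)\,d\tau}f(s)\,ds\right)^{1/2}}.$$
   Context: A solution on $[0,R)$ is a function $\varphi\in C^2((0,R))\cap C([0,R))$ satisfying the ODE on $(0,R)$, $\varphi(0)=a$, $\lim_{r\to0^+}\varphi'(r)=0=\varphi'(0)$, and such that $\lim_{r\to0^+}\varphi''(r)$ exists in $\mathbb{R}$. $g^+=\max(g,0)$, $g^-=\max(-g,0)$. *)

theory Defs
  imports "HOL-Analysis.Analysis"
begin

definition oint :: "real \<Rightarrow> real \<Rightarrow> (real \<Rightarrow> real) \<Rightarrow> real" where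
  "oint a b h = (if a \<le> b then integral {a..b} h else - integral {b..a} h)"

definition ode_solution ::
  "real \<Rightarrow> real \<Rightarrow> (real \<Rightarrow> real) \<Rightarrow> (real \<Rightarrow> real) \<Rightarrow> real \<Rightarrow> real \<Rightarrow> (real \<Rightarrow> real) \<Rightarrow> bool" where
  "ode_solution q c f g a R \<phi> \<longleftrightarrow>
     (\<exists>\<phi>' \<phi>''.
        continuous_on {0..<R} \<phi> \<and>
        (\<forall>r\<in>{0<..<R}. (\<phi> has_real_derivative \<phi>' r) (at r) \<and>
                        (\<phi>' has_real_derivative \<phi>'' r) (at r)) \<and>
        continuous_on {0<..<R} \<phi>'' \<and>
        (\<forall>r\<in>{0<..<R}. \<phi>'' r + (c - 1) / r * \<phi>' r = f (\<phi> r) + g (\<phi> r) * \<bar>\<phi>' r\<bar> powr q) \<and>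
        \<phi> 0 = a \<and>
        (\<phi>' \<longlongrightarrow> 0) (at_right 0) \<and>
        (\<phi> has_real_derivative 0) (at 0 within {0..<R}) \<and>
        (\<exists>L. (\<phi>'' \<longlongrightarrow> L) (at_right 0)))"

end

theory Submission
  imports Defs
begin
lemma sign_le:
  fixes D D' :: "real \<Rightarrow> real"
  assumes r1: "0 \<le> r1" and cont: "continuous_on {0..r1} D" and D0: "D 0 \<le> 0"
    and der: "\<And>s. 0 < s \<Longrightarrow> s < r1 \<Longrightarrow> (D has_real_derivative D' s) (at s)"
    and neg: "\<And>s. 0 < s \<Longrightarrow> s < r1 \<Longrightarrow> D s > 0 \<Longrightarrow> D' s \<le> 0"
  shows "D r1 \<le> 0"
proof (rule ccontr)
  assume "\<not> D r1 \<le> 0"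
  hence pos: "D r1 > 0" by simp
  define S where "S = {s \<in> {0..r1}. D s \<le> 0}"
  have "closed S" unfolding S_def
    by (rule continuous_on_closed_Collect_le[OF cont continuous_on_const closed_atLeastAtMost])
  moreover have "S \<noteq> {}" using D0 r1 by (auto simp: S_def)
  moreover have "bdd_above S" by (auto simp: S_def bdd_above_def)
  ultimately have s0S: "Sup S \<in> S" by (meson closed_contains_Sup)
  define s0 where "s0 = Sup S"
  have s0: "0 \<le> s0" "s0 \<le> r1" "D s0 \<le> 0" using s0S by (auto simp: S_def s0_def)
  hence lt: "s0 < r1" using pos by (metis order.not_eq_order_implies_strict not_le)
  have "continuous_on {s0..r1} D" using continuous_on_subset[OF cont] s0 by auto
  moreover have "\<forall>x. s0 < x \<and> x < r1 \<longrightarrow> D differentiable (at x)"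
    using der s0 by (metis order.strict_trans1 real_differentiable_def)
  ultimately obtain l z where z: "s0 < z" "z < r1" "DERIV D z :> l" "D r1 - D s0 = (r1 - s0) * l"
    using MVT[OF lt] by blast
  have zpos: "0 < z" using z s0 by linarith
  have "z \<notin> S"
  proof
    assume "z \<in> S"
    hence "z \<le> Sup S" using \<open>bdd_above S\<close> by (rule cSup_upper)
    thus False using z s0_def by simp
  qed
  hence "D z > 0" using zpos z by (auto simp: S_def)
  hence "D' z \<le> 0" using neg zpos z by auto
  moreover have "l = D' z" using DERIV_unique[OF z(3) der[OF zpos z(2)]] .
  ultimately have "D r1 - D s0 \<le> 0" using z lt by (simp add: mult_nonneg_nonpos)
  thus False using s0 pos by linarith
qed

lemma sign_ge:
  fixes D D' :: "real \<Rightarrow> real"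
  assumes r1: "0 \<le> r1" and cont: "continuous_on {0..r1} D" and D0: "D 0 \<ge> 0"
    and der: "\<And>s. 0 < s \<Longrightarrow> s < r1 \<Longrightarrow> (D has_real_derivative D' s) (at s)"
    and neg: "\<And>s. 0 < s \<Longrightarrow> s < r1 \<Longrightarrow> D s < 0 \<Longrightarrow> D' s \<ge> 0"
  shows "D r1 \<ge> 0"
proof -
  have "(\<lambda>s. - D s) r1 \<le> 0"
  proof (rule sign_le[where D="\<lambda>s. - D s" and D' = "\<lambda>s. - D' s"])
    show "continuous_on {0..r1} (\<lambda>s. - D s)" using cont by (intro continuous_intros)
    show "((\<lambda>s. - D s) has_real_derivative - D' s) (at s)" if "0 < s" "s < r1" for s
      using der[OF that] by (intro derivative_eq_intros) auto
    show "- D' s \<le> 0" if "0 < s" "s < r1" "- D s > 0" for s using neg[of s] that by auto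
    show "0 \<le> r1" by fact
    show "- D 0 \<le> 0" using D0 by simp
  qed
  thus ?thesis by simp
qed

lemma integrable_inv_sqrt:
  fixes a b :: real assumes "a \<le> b"
  shows "(\<lambda>t. 1 / sqrt (t - a)) integrable_on {a..b}"
proof -
  have "((\<lambda>t. 1 / sqrt (t - a)) has_integral (2 * sqrt (b - a) - 2 * sqrt (a - a))) {a..b}"
  proof (rule fundamental_theorem_of_calculus_interior[OF assms])
    show "continuous_on {a..b} (\<lambda>t. 2 * sqrt (t - a))" by (intro continuous_intros)
    fix x assume x: "x \<in> {a<..<b}"
    show "((\<lambda>t. 2 * sqrt (t - a)) has_vector_derivative 1 / sqrt (x - a)) (at x)"
      unfolding has_real_derivative_iff_has_vector_derivative[symmetric]
      using x by (auto intro!: derivative_eq_intros simp: field_simps)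
  qed
  thus ?thesis by blast
qed

lemma integrable_dom:
  fixes k :: "real \<Rightarrow> real" and a b B :: real
  assumes ab: "a \<le> b" and kc: "continuous_on {a<..b} k"
    and kb: "\<And>t. a < t \<Longrightarrow> t \<le> b \<Longrightarrow> 0 \<le> k t \<and> k t \<le> B / sqrt (t - a)"
  shows "k integrable_on {a..b}"
proof -
  have "k integrable_on {a<..<b}"
  proof (rule measurable_bounded_by_integrable_imp_integrable_real)
    show "k \<in> borel_measurable (lebesgue_on {a<..<b})"
      by (rule continuous_imp_measurable_on_sets_lebesgue)
         (auto intro: continuous_on_subset[OF kc])
    have "(\<lambda>t. B * (1 / sqrt (t - a))) integrable_on {a..b}"
      using integrable_cmul[OF integrable_inv_sqrt[OF ab], of B] by simp
    thus "(\<lambda>t. B / sqrt (t - a)) integrable_on {a<..<b}"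
      by (simp add: integrable_on_Icc_iff_Ioo[symmetric])
    show "\<bar>k x\<bar> \<le> B / sqrt (x - a)" if "x \<in> {a<..<b}" for x
      using kb[of x] that by auto
    show "{a<..<b} \<in> sets lebesgue" by simp
  qed
  thus ?thesis by (simp add: integrable_on_Icc_iff_Ioo)
qed

lemma Psi_deriv:
  fixes k :: "real \<Rightarrow> real"
  assumes ki: "k integrable_on {a..b}" and kc: "continuous_on {a<..b} k" and x: "a < x" "x < b"
  shows "((\<lambda>t. integral {a..t} k) has_real_derivative k x) (at x)"
proof -
  have "isCont k x" using continuous_on_interior[OF kc] x by simp
  hence "continuous (at x within ({a..b} - {})) k" by (rule continuous_at_imp_continuous_at_within)
  from integral_has_vector_derivative_continuous_at[OF ki _ _ this] x
  have "((\<lambda>t. integral {a..t} k) has_vector_derivative k x) (at x within {a..b})" by simp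
  thus ?thesis using x by (simp add: at_within_Icc_at has_real_derivative_iff_has_vector_derivative)
qed

lemma int_lower:
  fixes \<phi> p k :: "real \<Rightarrow> real" and a r1 M :: real
  assumes r1: "0 < r1" and phic: "continuous_on {0..r1} \<phi>" and phi0: "\<phi> 0 = a"
    and phid: "\<And>s. 0 < s \<Longrightarrow> s < r1 \<Longrightarrow> (\<phi> has_real_derivative p s) (at s)"
    and phir: "\<And>s. 0 < s \<Longrightarrow> s < r1 \<Longrightarrow> a < \<phi> s \<and> \<phi> s < \<phi> r1"
    and kc: "continuous_on {a<..\<phi> r1} k"
    and bnd: "\<And>s. 0 < s \<Longrightarrow> s < r1 \<Longrightarrow> p s * k (\<phi> s) \<le> M"
    and M: "0 \<le> M"
  shows "integral {a..\<phi> r1} k \<le> M * r1"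
proof (cases "k integrable_on {a..\<phi> r1}")
  case False
  thus ?thesis using M r1 by (simp add: not_integrable_integral)
next
  case ki: True
  define b where "b = \<phi> r1"
  have ab: "a < b" using phir[of "r1/2"] r1 by (auto simp: b_def)
  have img: "\<phi> ` {0..r1} \<subseteq> {a..b}"
  proof
    fix y assume "y \<in> \<phi> ` {0..r1}"
    then obtain s where s: "s \<in> {0..r1}" "y = \<phi> s" by auto
    show "y \<in> {a..b}"
      using s phir[of s] phi0 ab by (cases "s = 0"; cases "s = r1") (auto simp: b_def)
  qed
  define D where "D s = integral {a..\<phi> s} k - M * s" for s
  have "D r1 \<le> 0"
  proof (rule sign_le[where D=D and D' = "\<lambda>s. k (\<phi> s) * p s - M"])
    show "continuous_on {0..r1} D" unfolding D_def
      by (intro continuous_intros continuous_on_compose2[OF indefinite_integral_continuous_1[OF ki[unfolded b_def[symmetric]]] phic img])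
    show "D 0 \<le> 0" by (simp add: D_def phi0)
    fix s assume s: "0 < s" "s < r1"
    have "((\<lambda>t. integral {a..t} k) has_real_derivative k (\<phi> s)) (at (\<phi> s))"
      using Psi_deriv[OF ki kc] phir[OF s] by simp
    from DERIV_chain2[OF this phid[OF s]]
    show "(D has_real_derivative k (\<phi> s) * p s - M) (at s)" unfolding D_def
      by (auto intro!: derivative_eq_intros)
    show "k (\<phi> s) * p s - M \<le> 0" using bnd[OF s] by (simp add: mult.commute)
  qed (use r1 in auto)
  thus ?thesis by (simp add: D_def)
qed

lemma int_upper:
  fixes \<phi> p k :: "real \<Rightarrow> real" and a r1 m :: real
  assumes r1: "0 < r1" and phic: "continuous_on {0..r1} \<phi>" and phi0: "\<phi> 0 = a"
    and phid: "\<And>s. 0 < s \<Longrightarrow> s < r1 \<Longrightarrow> (\<phi> has_real_derivative p s) (at s)"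
    and phir: "\<And>s. 0 < s \<Longrightarrow> s < r1 \<Longrightarrow> a < \<phi> s \<and> \<phi> s < \<phi> r1"
    and kc: "continuous_on {a<..\<phi> r1} k" and ki: "k integrable_on {a..\<phi> r1}"
    and bnd: "\<And>s. 0 < s \<Longrightarrow> s < r1 \<Longrightarrow> m \<le> p s * k (\<phi> s)"
  shows "m * r1 \<le> integral {a..\<phi> r1} k"
proof -
  define b where "b = \<phi> r1"
  have ab: "a < b" using phir[of "r1/2"] r1 by (auto simp: b_def)
  have img: "\<phi> ` {0..r1} \<subseteq> {a..b}"
  proof
    fix y assume "y \<in> \<phi> ` {0..r1}"
    then obtain s where s: "s \<in> {0..r1}" "y = \<phi> s" by auto
    show "y \<in> {a..b}"
      using s phir[of s] phi0 ab by (cases "s = 0"; cases "s = r1") (auto simp: b_def)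
  qed
  define D where "D s = m * s - integral {a..\<phi> s} k" for s
  have "D r1 \<le> 0"
  proof (rule sign_le[where D=D and D' = "\<lambda>s. m - k (\<phi> s) * p s"])
    show "continuous_on {0..r1} D" unfolding D_def
      by (intro continuous_intros continuous_on_compose2[OF indefinite_integral_continuous_1[OF ki[unfolded b_def[symmetric]]] phic img])
    show "D 0 \<le> 0" by (simp add: D_def phi0)
    fix s assume s: "0 < s" "s < r1"
    have "((\<lambda>t. integral {a..t} k) has_real_derivative k (\<phi> s)) (at (\<phi> s))"
      using Psi_deriv[OF ki kc] phir[OF s] by simp
    from DERIV_chain2[OF this phid[OF s]]
    show "(D has_real_derivative m - k (\<phi> s) * p s) (at s)" unfolding D_def
      by (auto intro!: derivative_eq_intros)
    show "m - k (\<phi> s) * p s \<le> 0" using bnd[OF s] by (simp add: mult.commute)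
  qed (use r1 in auto)
  thus ?thesis by (simp add: D_def)
qed

locale odes =
  fixes q c a R L :: real and f g \<phi> p pp :: "real \<Rightarrow> real"
  assumes q_pos: "0 < q" and q_le: "q \<le> 2" and c1: "1 \<le> c"
  and f_cont: "continuous_on UNIV f" and f_mono: "mono f" and f_pos: "\<And>x. 0 < f x"
  and g_cont: "continuous_on UNIV g" and g_mono: "mono g" and R_pos: "0 < R"
  and phic: "continuous_on {0..<R} \<phi>"
  and dphi: "\<And>r. 0 < r \<Longrightarrow> r < R \<Longrightarrow> (\<phi> has_real_derivative p r) (at r)"
  and dp: "\<And>r. 0 < r \<Longrightarrow> r < R \<Longrightarrow> (p has_real_derivative pp r) (at r)"
  and ppc: "continuous_on {0<..<R} pp"
  and ode: "\<And>r. 0 < r \<Longrightarrow> r < R \<Longrightarrow> pp r + (c-1)/r * p r = f (\<phi> r) + g (\<phi> r) * \<bar>p r\<bar> powr q"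
  and phi0: "\<phi> 0 = a" and p0: "(p \<longlongrightarrow> 0) (at_right 0)" and ppL: "(pp \<longlongrightarrow> L) (at_right 0)"
begin

definition pt where "pt s = (if s = 0 then 0 else p s)"

lemma p_isCont: "0 < r \<Longrightarrow> r < R \<Longrightarrow> isCont p r"
  using dp by (rule DERIV_isCont)

lemma phi_isCont: "0 < r \<Longrightarrow> r < R \<Longrightarrow> isCont \<phi> r"
  using dphi by (rule DERIV_isCont)

lemma pp_isCont: "0 < r \<Longrightarrow> r < R \<Longrightarrow> isCont pp r"
  using continuous_on_interior[OF ppc, of r] by simp

lemma phi_tendsto0: "(\<phi> \<longlongrightarrow> a) (at_right 0)"
proof -
  have "continuous_on {0..R/2} \<phi>" using phic by (rule continuous_on_subset) (use R_pos in auto)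
  from continuous_on_Icc_at_rightD[OF this] R_pos show ?thesis by (simp add: phi0)
qed

lemma pt_isCont: "0 < r \<Longrightarrow> r < R \<Longrightarrow> isCont pt r"
proof -
  assume r: "0 < r" "r < R"
  have "eventually (\<lambda>x. pt x = p x) (nhds r)"
    by (rule eventually_mono[OF eventually_nhds_in_open[of "{0<..}" r]]) (use r in \<open>auto simp: pt_def\<close>)
  thus ?thesis using p_isCont[OF r] isCont_cong by blast
qed

lemma pt_tendsto0: "(pt \<longlongrightarrow> 0) (at_right 0)"
proof -
  have "eventually (\<lambda>x. p x = pt x) (at_right 0)"
    by (auto simp: pt_def eventually_at_right_field intro!: exI[of _ 1])
  from tendsto_cong[OF this] p0 show ?thesis by simp
qed

lemma pt_cont: assumes "0 < r1" "r1 < R" shows "continuous_on {0..r1} pt"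
proof (rule continuous_on_IccI)
  show "(pt \<longlongrightarrow> pt 0) (at_right 0)" using pt_tendsto0 by (simp add: pt_def)
  show "(pt \<longlongrightarrow> pt r1) (at_left r1)"
    using pt_isCont[OF assms] unfolding isCont_def filterlim_at_split by simp
  show "pt \<midarrow>x\<rightarrow> pt x" if "0 < x" "x < r1" for x
    using pt_isCont[of x] that assms by (simp add: isCont_def)
qed fact

lemma phi_cont: assumes "r1 < R" shows "continuous_on {0..r1} \<phi>"
  using phic by (rule continuous_on_subset) (use assms in auto)

lemma dpt: "0 < r \<Longrightarrow> r < R \<Longrightarrow> (pt has_real_derivative pp r) (at r)"
proof -
  assume r: "0 < r" "r < R"
  have "eventually (\<lambda>x. p x = pt x) (nhds r)"
    by (rule eventually_mono[OF eventually_nhds_in_open[of "{0<..}" r]]) (use r in \<open>auto simp: pt_def\<close>)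
  from DERIV_cong_ev[OF refl this refl] dp[OF r] show ?thesis by simp
qed

lemma L_eq: "L = f a / c"
proof -
  have lim1: "((\<lambda>x. p x / x) \<longlongrightarrow> L) (at_right 0)"
  proof (rule lhopital_right_0[where f'=pp and g'="\<lambda>_. 1"])
    show "(p \<longlongrightarrow> 0) (at_right 0)" by (rule p0)
    show "((\<lambda>x. x) \<longlongrightarrow> 0) (at_right 0)" by (intro tendsto_ident_at)
    show "eventually (\<lambda>x::real. x \<noteq> 0) (at_right 0)"
      by (rule eventually_mono[OF eventually_at_right_less]) simp
    show "eventually (\<lambda>x. (1::real) \<noteq> 0) (at_right 0)" by simp
    show "eventually (\<lambda>x. DERIV p x :> pp x) (at_right 0)"
      using R_pos dp by (auto simp: eventually_at_right_field intro!: exI[of _ R])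
    show "eventually (\<lambda>x. DERIV (\<lambda>x. x) x :> 1) (at_right 0)"
      by (auto intro!: derivative_eq_intros always_eventually)
    show "((\<lambda>x. pp x / 1) \<longlongrightarrow> L) (at_right 0)" using ppL by simp
  qed
  have ev: "eventually (\<lambda>x. pp x = f (\<phi> x) + g (\<phi> x) * \<bar>p x\<bar> powr q - (c - 1) * (p x / x)) (at_right 0)"
    using R_pos ode by (auto simp: eventually_at_right_field intro!: exI[of _ R] simp: algebra_simps)
  have "((\<lambda>x. f (\<phi> x) + g (\<phi> x) * \<bar>p x\<bar> powr q - (c - 1) * (p x / x)) \<longlongrightarrow>
      f a + g a * 0 - (c - 1) * L) (at_right 0)"
  proof (intro tendsto_intros lim1)
    have fc: "isCont f a" "isCont g a" using f_cont g_cont by (auto simp: continuous_on_eq_continuous_at)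
    show "((\<lambda>x. f (\<phi> x)) \<longlongrightarrow> f a) (at_right 0)"
      using isCont_tendsto_compose[OF fc(1) phi_tendsto0] .
    show "((\<lambda>x. g (\<phi> x)) \<longlongrightarrow> g a) (at_right 0)"
      using isCont_tendsto_compose[OF fc(2) phi_tendsto0] .
    show "((\<lambda>x. \<bar>p x\<bar> powr q) \<longlongrightarrow> 0) (at_right 0)"
      by (rule tendsto_zero_powrI) (use p0 q_pos in \<open>auto intro: tendsto_rabs_zero\<close>)
  qed
  hence "(pp \<longlongrightarrow> f a - (c - 1) * L) (at_right 0)"
    using tendsto_cong[OF ev] by simp
  from tendsto_unique[OF _ ppL this] have "L = f a - (c-1) * L" by simp
  thus ?thesis using c1 by (simp add: field_simps)
qed

lemma pp_pos_near0: obtains d where "0 < d" "d \<le> R" "\<And>s. 0 < s \<Longrightarrow> s < d \<Longrightarrow> 0 < pp s"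
proof -
  have "0 < L" using L_eq f_pos c1 by simp
  from order_tendstoD(1)[OF ppL this] obtain b where b: "0 < b" "\<And>y. 0 < y \<Longrightarrow> y < b \<Longrightarrow> 0 < pp y"
    by (auto simp: eventually_at_right_field)
  show ?thesis using that[of "min b R"] b R_pos by auto
qed

lemma p_pos: assumes "0 < r" "r < R" shows "0 < p r"
proof -
  obtain d where d: "0 < d" "d \<le> R" "\<And>s. 0 < s \<Longrightarrow> s < d \<Longrightarrow> 0 < pp s"
    using pp_pos_near0 by blast
  have small: "0 < p s" if s: "0 < s" "s < d" for s
  proof -
    have nn: "0 \<le> p u" if u: "0 < u" "u < d" for u
    proof -
      have "(\<lambda>x. - pt x) u \<le> 0"
      proof (rule sign_le[where D="\<lambda>x. - pt x" and D'="\<lambda>x. - pp x"])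
        show "continuous_on {0..u} (\<lambda>x. - pt x)" using pt_cont[of u] u d by (auto intro: continuous_intros)
        show "((\<lambda>x. - pt x) has_real_derivative - pp x) (at x)" if "0 < x" "x < u" for x
          using dpt[of x] that u d by (auto intro!: derivative_eq_intros)
        show "- pp x \<le> 0" if "0 < x" "x < u" "0 < - pt x" for x using d(3)[of x] that u by auto
      qed (use u in \<open>auto simp: pt_def\<close>)
      thus ?thesis using u by (simp add: pt_def)
    qed
    from DERIV_pos_inc_left[OF dp[of s] d(3)[OF s]] s d obtain e where
      e: "0 < e" "\<And>h. 0 < h \<Longrightarrow> h < e \<Longrightarrow> p (s - h) < p s" by auto
    define h where "h = min e s / 2"
    have "p (s - h) < p s" using e s by (auto simp: h_def)
    moreover have "0 \<le> p (s - h)" using nn[of "s - h"] s e by (auto simp: h_def)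
    ultimately show ?thesis by simp
  qed
  show ?thesis
  proof (rule ccontr)
    assume "\<not> 0 < p r"
    define Z where "Z = {x. 0 < x \<and> x < R \<and> p x \<le> 0}"
    have Zne: "Z \<noteq> {}" using assms \<open>\<not> 0 < p r\<close> by (auto simp: Z_def)
    have Zbd: "bdd_below Z" by (rule bdd_belowI[of _ 0]) (auto simp: Z_def)
    define T where "T = Inf Z"
    have dZ: "d \<le> z" if "z \<in> Z" for z using small[of z] that by (force simp: Z_def)
    have Td: "d \<le> T" unfolding T_def using Zne dZ by (rule cInf_greatest)
    have TR: "T < R"
    proof -
      obtain z where "z \<in> Z" using Zne by auto
      hence "T \<le> z" "z < R" using Zbd by (auto simp: T_def Z_def intro: cInf_lower)
      thus ?thesis by simp
    qed
    have T0: "0 < T" using Td d by simp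
    have below: "0 < p s" if "0 < s" "s < T" for s
    proof (rule ccontr)
      assume "\<not> 0 < p s"
      hence "s \<in> Z" using that TR by (auto simp: Z_def)
      hence "T \<le> s" using Zbd by (auto simp: T_def intro: cInf_lower)
      thus False using that by simp
    qed
    have cT: "isCont p T" using p_isCont T0 TR by simp
    have pT: "p T = 0"
    proof (rule ccontr)
      assume ne: "p T \<noteq> 0"
      show False
      proof (cases "p T > 0")
        case True
        from order_tendstoD(1)[OF cT[unfolded isCont_def] True]
        obtain e where e: "0 < e" "\<And>y. y \<noteq> T \<Longrightarrow> dist y T < e \<Longrightarrow> 0 < p y"
          by (auto simp: eventually_at)
        obtain z where z: "z \<in> Z" "z < T + e" using cInf_lessD[OF Zne, of "T + e"] e by (auto simp: T_def)
        have "T \<le> z" using z Zbd by (auto simp: T_def intro: cInf_lower)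
        hence "z = T \<or> 0 < p z" using e(2)[of z] z by (auto simp: dist_real_def)
        thus False using z True by (auto simp: Z_def)
      next
        case False
        hence neg: "p T < 0" using ne by simp
        from order_tendstoD(2)[OF cT[unfolded isCont_def] neg]
        obtain e where e: "0 < e" "\<And>y. y \<noteq> T \<Longrightarrow> dist y T < e \<Longrightarrow> p y < 0"
          by (auto simp: eventually_at)
        define y where "y = T - min e T / 2"
        have "p y < 0" using e T0 by (intro e(2)) (auto simp: y_def dist_real_def)
        moreover have "0 < p y" using T0 e by (intro below) (auto simp: y_def)
        ultimately show False by simp
      qed
    qed
    have "pp T = f (\<phi> T)" using ode[OF T0 TR] pT q_pos by simp
    hence ppT: "0 < pp T" using f_pos by simp
    from DERIV_pos_inc_left[OF dp[OF T0 TR] ppT] obtain e where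
      e: "0 < e" "\<And>h. 0 < h \<Longrightarrow> h < e \<Longrightarrow> p (T - h) < p T" by auto
    define h where "h = min e T / 2"
    have "p (T - h) < 0" using e T0 pT by (auto simp: h_def)
    moreover have "0 < p (T - h)" using e T0 by (intro below) (auto simp: h_def)
    ultimately show False by simp
  qed
qed

lemma phi_less: assumes "0 \<le> s" "s < t" "t < R" shows "\<phi> s < \<phi> t"
proof -
  have "continuous_on {s..t} \<phi>" using phic by (rule continuous_on_subset) (use assms in auto)
  moreover have "\<forall>x. s < x \<and> x < t \<longrightarrow> \<phi> differentiable (at x)"
    using dphi assms by (metis less_trans order.strict_trans1 real_differentiable_def)
  ultimately obtain l z where z: "s < z" "z < t" "DERIV \<phi> z :> l" "\<phi> t - \<phi> s = (t - s) * l"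
    using MVT[OF assms(2)] by blast
  have "l = p z" using DERIV_unique[OF z(3) dphi[of z]] z assms by simp
  hence "0 < l" using p_pos[of z] z assms by simp
  hence "0 < (t - s) * l" using z by simp
  thus ?thesis using z by simp
qed

lemma phi_ge: "0 \<le> s \<Longrightarrow> s < R \<Longrightarrow> a \<le> \<phi> s"
  using phi_less[of 0 s] phi0 by (cases "s = 0") auto

lemma p_abs: "0 < r \<Longrightarrow> r < R \<Longrightarrow> \<bar>p r\<bar> = p r"
  using p_pos by fastforce

end

lemma IH_deriv:
  fixes h :: "real \<Rightarrow> real"
  assumes "continuous_on {a..b} h" "a < x" "x < b"
  shows "((\<lambda>t. integral {a..t} h) has_real_derivative h x) (at x)"
  using integral_has_real_derivative[OF assms(1), of x] assms by (simp add: at_within_Icc_at)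

lemma IH_cont:
  fixes h :: "real \<Rightarrow> real"
  assumes "continuous_on {a..b} h"
  shows "continuous_on {a..b} (\<lambda>t. integral {a..t} h)"
  by (rule indefinite_integral_continuous_1[OF integrable_continuous_real[OF assms]])

lemma IH_split:
  fixes h :: "real \<Rightarrow> real"
  assumes "continuous_on {a..b} h" "a \<le> s" "s \<le> t" "t \<le> b"
  shows "integral {s..t} h = integral {a..t} h - integral {a..s} h"
proof -
  have "h integrable_on {a..t}"
    using integrable_continuous_real[OF continuous_on_subset[OF assms(1)]] assms by auto
  from Henstock_Kurzweil_Integration.integral_combine[OF assms(2,3) this] show ?thesis by simp
qed

lemma IH_mono:
  fixes h :: "real \<Rightarrow> real"
  assumes "continuous_on {a..b} h" "\<And>x. a \<le> x \<Longrightarrow> x \<le> b \<Longrightarrow> 0 \<le> h x"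
    "a \<le> s" "s \<le> t" "t \<le> b"
  shows "integral {a..s} h \<le> integral {a..t} h"
proof (rule integral_subset_le)
  show "h integrable_on {a..s}" "h integrable_on {a..t}"
    using integrable_continuous_real[OF continuous_on_subset[OF assms(1)]] assms by auto
qed (use assms in auto)

lemma IH_lower:
  fixes h :: "real \<Rightarrow> real"
  assumes "continuous_on {a..b} h" "\<And>x. a \<le> x \<Longrightarrow> x \<le> t \<Longrightarrow> m \<le> h x" "a \<le> t" "t \<le> b"
  shows "m * (t - a) \<le> integral {a..t} h"
proof -
  have "integral {a..t} (\<lambda>x. m) \<le> integral {a..t} h"
    by (rule integral_le) (use assms integrable_continuous_real[OF continuous_on_subset[OF assms(1)]] in auto)
  thus ?thesis using assms by (simp add: mult.commute)
qed

lemma IH_nonneg: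
  fixes h :: "real \<Rightarrow> real"
  assumes "continuous_on {a..b} h" "\<And>x. a \<le> x \<Longrightarrow> x \<le> t \<Longrightarrow> 0 \<le> h x" "t \<le> b"
  shows "0 \<le> integral {a..t} h"
proof (cases "a \<le> t")
  case True thus ?thesis
    by (intro integral_nonneg) (use assms integrable_continuous_real[OF continuous_on_subset[OF assms(1)]] in auto)
qed simp

lemma alg1:
  fixes M A B q :: real
  assumes M: "0 < M" and A: "0 \<le> A" and B: "0 \<le> B" and q: "0 < q" "q < 2"
    and ineq: "M^2 \<le> 2 * A + 2 * M powr q * B"
  shows "M \<le> 2 powr (2 / (2 - q)) * (sqrt A + B powr (1 / (2 - q)))"
proof -
  have one: "1 \<le> 2 / (2 - q)" using q by (simp add: field_simps)
  have two: "2 \<le> 2 powr (2 / (2 - q))"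
    using powr_mono[OF one, of 2] by simp
  show ?thesis
  proof (cases "M powr q * B \<le> A")
    case True
    hence "M^2 \<le> 4 * A" using ineq by simp
    hence "M \<le> sqrt (4 * A)" using M by (metis abs_of_pos real_le_rsqrt)
    also have "\<dots> = 2 * sqrt A" by (simp add: real_sqrt_mult)
    also have "\<dots> \<le> 2 powr (2 / (2 - q)) * sqrt A" using two A by (intro mult_right_mono) auto
    also have "\<dots> \<le> 2 powr (2 / (2 - q)) * (sqrt A + B powr (1 / (2 - q)))" by (intro mult_left_mono) auto
    finally show ?thesis .
  next
    case False
    have eq4: "4 powr (1 / (2 - q)) = 2 powr (2 / (2 - q))"
    proof -
      have "((2::real) powr 2) powr (1 / (2 - q)) = 2 powr (2 * (1 / (2 - q)))" by (rule powr_powr)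
      moreover have "(2::real) powr 2 = 4" by simp
      ultimately show ?thesis by simp
    qed
    from False have False': "\<not> M powr q * B \<le> A" .
    have "M^2 < 4 * (M powr q * B)" using ineq False' by simp
    moreover have "M^2 = M powr q * M powr (2 - q)"
    proof -
      have "M powr q * M powr (2 - q) = M powr (q + (2 - q))" by (rule powr_add[symmetric])
      also have "\<dots> = M powr 2" by simp
      also have "\<dots> = M^2" using M by (simp add: powr_numeral)
      finally show ?thesis by simp
    qed
    ultimately have "M powr q * M powr (2 - q) < M powr q * (4 * B)" by simp
    hence lt: "M powr (2 - q) < 4 * B" using M by (simp add: mult_less_cancel_left_pos)
    have "(M powr (2 - q)) powr (1 / (2 - q)) = M powr ((2 - q) * (1 / (2 - q)))" by (rule powr_powr)
    also have "(2 - q) * (1 / (2 - q)) = 1" using q by simp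
    finally have "M = (M powr (2 - q)) powr (1 / (2 - q))" using M by simp
    also have "\<dots> \<le> (4 * B) powr (1 / (2 - q))" using lt q by (intro powr_mono2) auto
    also have "\<dots> = 4 powr (1 / (2 - q)) * B powr (1 / (2 - q))"
      using B by (simp add: powr_mult)
    also have "\<dots> = 2 powr (2 / (2 - q)) * B powr (1 / (2 - q))" using eq4 by simp
    also have "\<dots> \<le> 2 powr (2 / (2 - q)) * (sqrt A + B powr (1 / (2 - q)))" using A by (intro mult_left_mono) auto
    finally show ?thesis .
  qed
qed

context odes begin

definition Fi where "Fi t = integral {a..t} f"
definition Gp where "Gp t = integral {a..t} (\<lambda>s. max (g s) 0)"

lemma fc: "continuous_on S f" using f_cont by (rule continuous_on_subset) auto
lemma gc: "continuous_on S g" using g_cont by (rule continuous_on_subset) auto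
lemma gpc: "continuous_on S (\<lambda>s. max (g s) 0)" by (intro continuous_intros gc)

lemma img: assumes "r1 < R" shows "\<phi> ` {0..r1} \<subseteq> {a..\<phi> r1}"
proof
  fix y assume "y \<in> \<phi> ` {0..r1}"
  then obtain s where s: "0 \<le> s" "s \<le> r1" "y = \<phi> s" by auto
  show "y \<in> {a..\<phi> r1}" using s phi_ge[of s] phi_less[of s r1] assms by (cases "s = r1") auto
qed

lemma phi_in: assumes "0 < u" "u < r1" "r1 < R" shows "a < \<phi> u" "\<phi> u < \<phi> r1"
  using phi_less[of 0 u] phi_less[of u r1] assms phi0 by auto

lemma comp_cont:
  assumes "continuous_on {a..\<phi> r1} h" "r1 < R"
  shows "continuous_on {0..r1} (\<lambda>u. h (\<phi> u))"
  by (rule continuous_on_compose2[OF assms(1) phi_cont[OF assms(2)] img[OF assms(2)]])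

lemma comp_deriv:
  assumes "continuous_on {a..\<phi> r1} h" "0 < u" "u < r1" "r1 < R"
  shows "((\<lambda>u. integral {a..\<phi> u} h) has_real_derivative h (\<phi> u) * p u) (at u)"
proof -
  have "((\<lambda>t. integral {a..t} h) has_real_derivative h (\<phi> u)) (at (\<phi> u))"
    using IH_deriv[OF assms(1)] phi_in[OF assms(2-4)] by simp
  from DERIV_chain2[OF this dphi] assms show ?thesis by simp
qed

lemma pp_upper: assumes "0 < u" "u < R"
  shows "pp u \<le> f (\<phi> u) + max (g (\<phi> u)) 0 * p u powr q"
proof -
  have e: "pp u = f (\<phi> u) + g (\<phi> u) * p u powr q - (c-1)/u * p u"
    using ode[OF assms] p_abs[OF assms] by simp
  have "0 \<le> (c-1)/u * p u" using c1 assms p_pos[OF assms] by simp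
  moreover have "g (\<phi> u) * p u powr q \<le> max (g (\<phi> u)) 0 * p u powr q"
    by (intro mult_right_mono) auto
  ultimately show ?thesis using e by linarith
qed

lemma part1_lt:
  assumes q2: "q < 2" and r: "0 < r" "r < R"
  shows "p r \<le> 2 powr (2/(2-q)) * (sqrt (Fi (\<phi> r)) + Gp (\<phi> r) powr (1/(2-q)))"
proof -
  obtain s0 where s0: "s0 \<in> {0..r}" "\<And>y. y \<in> {0..r} \<Longrightarrow> pt y \<le> pt s0"
    using continuous_attains_sup[OF compact_Icc _ pt_cont[OF r]] r by auto
  define M where "M = pt s0"
  have "pt r \<le> M" using s0(2)[of r] r by (simp add: M_def)
  hence prM: "p r \<le> M" using r by (simp add: pt_def)
  hence Mpos: "0 < M" using p_pos[OF r] by simp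
  hence s0pos: "0 < s0" using s0(1) by (cases "s0 = 0") (auto simp: M_def pt_def)
  have s0r: "s0 \<le> r" "s0 < R" using s0(1) r by auto
  define b where "b = \<phi> r"
  define D where "D u = (pt u)^2 - 2 * Fi (\<phi> u) - 2 * M powr q * Gp (\<phi> u)" for u
  have Dle: "D s0 \<le> 0"
  proof (rule sign_le[where D=D and D'="\<lambda>u. 2 * pt u * pp u - 2 * (f (\<phi> u) * p u) - 2 * M powr q * (max (g (\<phi> u)) 0 * p u)"])
    show "continuous_on {0..s0} D" unfolding D_def Fi_def Gp_def
      by (intro continuous_intros pt_cont[OF s0pos s0r(2)]
          comp_cont[OF IH_cont[OF fc] s0r(2)] comp_cont[OF IH_cont[OF gpc] s0r(2)])
    show "D 0 \<le> 0" by (simp add: D_def pt_def Fi_def Gp_def phi0)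
    fix u assume u: "0 < u" "u < s0"
    have uR: "u < R" using u s0r by simp
    have t1: "(pt has_real_derivative pp u) (at u)" by (rule dpt[OF u(1) uR])
    have d2: "((\<lambda>x. integral {a..\<phi> x} f) has_real_derivative f (\<phi> u) * p u) (at u)"
      by (rule comp_deriv[OF fc u s0r(2)])
    have d3: "((\<lambda>x. integral {a..\<phi> x} (\<lambda>s. max (g s) 0)) has_real_derivative max (g (\<phi> u)) 0 * p u) (at u)"
      by (rule comp_deriv[OF gpc u s0r(2)])
    show "(D has_real_derivative 2 * pt u * pp u - 2 * (f (\<phi> u) * p u) - 2 * M powr q * (max (g (\<phi> u)) 0 * p u)) (at u)"
      unfolding D_def Fi_def Gp_def
      by (intro derivative_eq_intros) (rule t1 d2 d3 | simp)+
    have pu: "pt u = p u" using u by (simp add: pt_def)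
    have puM: "p u \<le> M" using s0(2)[of u] u s0r by (simp add: M_def pt_def)
    have ppu: "pp u \<le> f (\<phi> u) + max (g (\<phi> u)) 0 * p u powr q" by (rule pp_upper[OF u(1) uR])
    have pq: "p u powr q \<le> M powr q" using puM p_pos[OF u(1) uR] q_pos by (intro powr_mono2) auto
    have "max (g (\<phi> u)) 0 * p u powr q \<le> max (g (\<phi> u)) 0 * M powr q"
      using pq by (intro mult_left_mono) auto
    hence "pp u - f (\<phi> u) - M powr q * max (g (\<phi> u)) 0 \<le> 0" using ppu by (simp add: mult.commute)
    hence "p u * (pp u - f (\<phi> u) - M powr q * max (g (\<phi> u)) 0) \<le> 0"
      using p_pos[OF u(1) uR] by (simp add: mult_nonneg_nonpos)
    thus "2 * pt u * pp u - 2 * (f (\<phi> u) * p u) - 2 * M powr q * (max (g (\<phi> u)) 0 * p u) \<le> 0"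
      unfolding pu by (simp add: algebra_simps)
  qed (use s0pos in simp)
  have sb: "\<phi> s0 \<le> b" using phi_less[of s0 r] s0r r s0pos by (cases "s0 = r") (auto simp: b_def)
  have ab: "a \<le> \<phi> s0" using phi_ge[of s0] s0r s0pos by simp
  have F1: "Fi (\<phi> s0) \<le> Fi b" unfolding Fi_def
    by (rule IH_mono[OF fc]) (use sb ab f_pos less_imp_le in auto)
  have G1: "Gp (\<phi> s0) \<le> Gp b" unfolding Gp_def
    by (rule IH_mono[OF gpc]) (use sb ab in auto)
  have A0: "0 \<le> Fi b" unfolding Fi_def by (rule IH_nonneg[OF fc]) (use f_pos less_imp_le in auto)
  have B0: "0 \<le> Gp b" unfolding Gp_def by (rule IH_nonneg[OF gpc]) auto
  have "M^2 \<le> 2 * Fi (\<phi> s0) + 2 * M powr q * Gp (\<phi> s0)"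
    using Dle s0pos by (simp add: D_def M_def)
  also have "\<dots> \<le> 2 * Fi b + 2 * M powr q * Gp b"
    using F1 G1 by (intro add_mono mult_left_mono) auto
  finally have "M \<le> 2 powr (2/(2-q)) * (sqrt (Fi b) + Gp b powr (1/(2-q)))"
    using alg1[OF Mpos A0 B0 q_pos q2] by simp
  thus ?thesis using prM by (simp add: b_def)
qed

end

lemma integral_cmult_real: "integral S (\<lambda>x. c * h x) = c * (integral S h :: real)"
  using integral_cmul[of S c h] by simp

lemma oint_eq: "a \<le> b \<Longrightarrow> oint a b h = integral {a..b} h"
  by (simp add: oint_def)

context odes begin

lemma Fi_cont: "continuous_on {a..b} Fi" unfolding Fi_def by (rule IH_cont[OF fc])
lemma Gp_cont: "continuous_on {a..b} Gp" unfolding Gp_def by (rule IH_cont[OF gpc])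

lemma Fi_lower: assumes "a \<le> t" shows "f a * (t - a) \<le> Fi t"
  unfolding Fi_def by (rule IH_lower[OF fc]) (use assms f_mono in \<open>auto simp: mono_def\<close>)

lemma Fi_pos: "a < t \<Longrightarrow> 0 < Fi t"
  using Fi_lower[of t] f_pos[of a] by (smt (verit) mult_pos_pos)

lemma Fi_nonneg: "0 \<le> Fi t"
  unfolding Fi_def by (rule IH_nonneg[OF fc, of _ t]) (use f_pos less_imp_le in auto)

lemma Gp_nonneg: "0 \<le> Gp t"
  unfolding Gp_def by (rule IH_nonneg[OF gpc, of _ t]) auto

lemma Gp_mono: "a \<le> s \<Longrightarrow> s \<le> t \<Longrightarrow> Gp s \<le> Gp t"
  unfolding Gp_def by (rule IH_mono[OF gpc]) auto

lemma Gp_split: "a \<le> s \<Longrightarrow> s \<le> t \<Longrightarrow> integral {s..t} (\<lambda>s. max (g s) 0) = Gp t - Gp s"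
  unfolding Gp_def by (rule IH_split[OF gpc]) auto

lemma powr2: "0 < x \<Longrightarrow> x powr 2 = (x::real)^2" by (simp add: powr_numeral)

definition E1 where "E1 t = integral {a..t} (\<lambda>s. exp (-2 * Gp s) * f s)"

lemma E1c: "continuous_on {a..b} (\<lambda>s. exp (-2 * Gp s) * f s)"
  by (intro continuous_intros Gp_cont fc)

lemma E1_pos: assumes "a < t" shows "0 < E1 t"
proof -
  have "exp (-2 * Gp t) * f a * (t - a) \<le> E1 t"
    unfolding E1_def
  proof (rule IH_lower[OF E1c])
    fix x assume x: "a \<le> x" "x \<le> t"
    have "exp (-2 * Gp t) \<le> exp (-2 * Gp x)" using Gp_mono[OF x] by simp
    moreover have "f a \<le> f x" using f_mono x by (auto simp: mono_def)
    ultimately show "exp (-2 * Gp t) * f a \<le> exp (-2 * Gp x) * f x"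
      using f_pos by (intro mult_mono) (auto simp: less_imp_le)
  qed (use assms in auto)
  moreover have "0 < exp (-2 * Gp t) * f a * (t - a)" using assms f_pos by simp
  ultimately show ?thesis by simp
qed

lemma part1_eq:
  assumes q2: "q = 2" and r: "0 < r" "r < R"
  shows "(p r)^2 \<le> 2 * exp (2 * Gp (\<phi> r)) * E1 (\<phi> r)"
proof -
  define D where "D u = exp (-2 * Gp (\<phi> u)) * (pt u)^2 - 2 * E1 (\<phi> u)" for u
  have Dle: "D r \<le> 0"
  proof (rule sign_le[where D=D and D'="\<lambda>u. exp (-2 * Gp (\<phi> u)) * (-2 * (max (g (\<phi> u)) 0 * p u)) * (pt u)^2
        + exp (-2 * Gp (\<phi> u)) * (2 * pt u * pp u) - 2 * (exp (-2 * Gp (\<phi> u)) * f (\<phi> u) * p u)"])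
    show "continuous_on {0..r} D" unfolding D_def E1_def
      by (intro continuous_intros pt_cont[OF r] comp_cont[OF IH_cont[OF E1c] r(2)] comp_cont[OF Gp_cont r(2)])
    show "D 0 \<le> 0" by (simp add: D_def pt_def E1_def phi0)
    fix u assume u: "0 < u" "u < r"
    have uR: "u < R" using u r by simp
    have t1: "(pt has_real_derivative pp u) (at u)" by (rule dpt[OF u(1) uR])
    have d2: "((\<lambda>x. integral {a..\<phi> x} (\<lambda>s. exp (-2 * Gp s) * f s)) has_real_derivative exp (-2 * Gp (\<phi> u)) * f (\<phi> u) * p u) (at u)"
      by (rule comp_deriv[OF E1c u r(2)])
    have d3: "((\<lambda>x. integral {a..\<phi> x} (\<lambda>s. max (g s) 0)) has_real_derivative max (g (\<phi> u)) 0 * p u) (at u)"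
      by (rule comp_deriv[OF gpc u r(2)])
    hence d3': "((\<lambda>x. Gp (\<phi> x)) has_real_derivative max (g (\<phi> u)) 0 * p u) (at u)"
      by (simp add: Gp_def)
    show "(D has_real_derivative exp (-2 * Gp (\<phi> u)) * (-2 * (max (g (\<phi> u)) 0 * p u)) * (pt u)^2
        + exp (-2 * Gp (\<phi> u)) * (2 * pt u * pp u) - 2 * (exp (-2 * Gp (\<phi> u)) * f (\<phi> u) * p u)) (at u)"
      unfolding D_def E1_def
      by (intro derivative_eq_intros) (rule t1 d2 d3' | simp)+
    have pu: "pt u = p u" using u by (simp add: pt_def)
    have pos: "0 < p u" by (rule p_pos[OF u(1) uR])
    have ppu: "pp u \<le> f (\<phi> u) + max (g (\<phi> u)) 0 * (p u)^2"
      using pp_upper[OF u(1) uR] q2 powr2[OF pos] by simp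
    hence "pp u - max (g (\<phi> u)) 0 * (p u)^2 - f (\<phi> u) \<le> 0" by simp
    hence "2 * exp (-2 * Gp (\<phi> u)) * p u * (pp u - max (g (\<phi> u)) 0 * (p u)^2 - f (\<phi> u)) \<le> 0"
      using pos by (simp add: mult_nonneg_nonpos)
    thus "exp (-2 * Gp (\<phi> u)) * (-2 * (max (g (\<phi> u)) 0 * p u)) * (pt u)^2
        + exp (-2 * Gp (\<phi> u)) * (2 * pt u * pp u) - 2 * (exp (-2 * Gp (\<phi> u)) * f (\<phi> u) * p u) \<le> 0"
      unfolding pu by (simp add: algebra_simps power2_eq_square)
  qed (use r in simp)
  hence "exp (-2 * Gp (\<phi> r)) * (p r)^2 \<le> 2 * E1 (\<phi> r)" using r by (simp add: D_def pt_def)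
  hence "exp (2 * Gp (\<phi> r)) * (exp (-2 * Gp (\<phi> r)) * (p r)^2) \<le> exp (2 * Gp (\<phi> r)) * (2 * E1 (\<phi> r))"
    by (intro mult_left_mono) auto
  thus ?thesis by (simp add: exp_minus field_simps)
qed

end

context odes begin

lemma b_gt: "0 < r \<Longrightarrow> r < R \<Longrightarrow> a < \<phi> r"
  using phi_less[of 0 r] phi0 by simp

lemma part1:
  assumes r: "0 \<le> r" "r < R"
  shows "r \<ge>
        (if q < 2 then
           1 / 2 powr (2 / (2 - q)) *
             oint a (\<phi> r) (\<lambda>t. 1 / (sqrt (oint a t f) + (oint a t (\<lambda>s. max (g s) 0)) powr (1 / (2 - q))))
         else
           oint a (\<phi> r) (\<lambda>t. 1 / sqrt (2 * oint a t (\<lambda>s. exp (2 * oint s t (\<lambda>\<rho>. max (g \<rho>) 0)) * f s))))"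
proof (cases "r = 0")
  case True thus ?thesis by (simp add: phi0 oint_def)
next
  case False
  hence r0: "0 < r" using r by simp
  define b where "b = \<phi> r"
  have ab: "a < b" using b_gt[OF r0 r(2)] by (simp add: b_def)
  show ?thesis
  proof (cases "q < 2")
    case True
    define M where "M = 2 powr (2 / (2 - q))"
    define k where "k t = 1 / (sqrt (Fi t) + Gp t powr (1 / (2 - q)))" for t
    have Spos: "0 < sqrt (Fi t) + Gp t powr (1 / (2 - q))" if "a < t" for t
      using Fi_pos[OF that] by (simp add: add_pos_nonneg)
    have eq: "oint a b (\<lambda>t. 1 / (sqrt (oint a t f) + (oint a t (\<lambda>s. max (g s) 0)) powr (1 / (2 - q))))
        = integral {a..b} k"
      using ab by (auto simp: oint_eq k_def Fi_def Gp_def intro!: integral_cong)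
    have "integral {a..\<phi> r} k \<le> M * r"
    proof (rule int_lower[OF r0 phi_cont[OF r(2)] phi0])
      show "(\<phi> has_real_derivative p s) (at s)" if "0 < s" "s < r" for s using dphi that r by simp
      show "a < \<phi> s \<and> \<phi> s < \<phi> r" if "0 < s" "s < r" for s using phi_in[OF that r(2)] by simp
      have c1: "continuous_on {a<..\<phi> r} Fi" by (rule continuous_on_subset[OF Fi_cont]) auto
      have c2: "continuous_on {a<..\<phi> r} Gp" by (rule continuous_on_subset[OF Gp_cont]) auto
      have c3: "continuous_on {a<..\<phi> r} (\<lambda>t. Gp t powr (1 / (2 - q)))"
        by (rule continuous_on_powr'[OF c2 continuous_on_const]) (use Gp_nonneg True in simp)
      have c4: "\<forall>t\<in>{a<..\<phi> r}. sqrt (Fi t) + Gp t powr (1 / (2 - q)) \<noteq> 0"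
        using Spos by (metis greaterThanAtMost_iff less_irrefl)
      show "continuous_on {a<..\<phi> r} k" unfolding k_def
        by (intro continuous_on_divide continuous_on_add continuous_on_const continuous_on_real_sqrt c1 c3 c4)
      show "0 \<le> M" by (simp add: M_def)
      fix s assume s: "0 < s" "s < r"
      have sR: "s < R" using s r by simp
      have S: "0 < sqrt (Fi (\<phi> s)) + Gp (\<phi> s) powr (1 / (2 - q))" using Spos phi_in[OF s r(2)] by simp
      have "p s \<le> M * (sqrt (Fi (\<phi> s)) + Gp (\<phi> s) powr (1 / (2 - q)))"
        using part1_lt[OF True s(1) sR] by (simp add: M_def)
      thus "p s * k (\<phi> s) \<le> M" using S by (simp add: k_def divide_le_eq)
    qed
    hence "1 / M * integral {a..b} k \<le> r" by (simp add: b_def M_def field_simps)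
    thus ?thesis using True eq by (simp add: b_def M_def)
  next
    case False
    hence q2: "q = 2" using q_le by simp
    define k where "k t = 1 / sqrt (2 * (exp (2 * Gp t) * E1 t))" for t
    have Hpos: "0 < 2 * (exp (2 * Gp t) * E1 t)" if "a < t" for t using E1_pos[OF that] by simp
    have inner: "oint a t (\<lambda>s. exp (2 * oint s t (\<lambda>\<rho>. max (g \<rho>) 0)) * f s) = exp (2 * Gp t) * E1 t"
      if t: "a \<le> t" for t
    proof -
      have "oint a t (\<lambda>s. exp (2 * oint s t (\<lambda>\<rho>. max (g \<rho>) 0)) * f s)
          = integral {a..t} (\<lambda>s. exp (2 * Gp t) * (exp (-2 * Gp s) * f s))"
      proof (simp only: oint_eq[OF t], rule integral_cong)
        fix s assume s: "s \<in> {a..t}"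
        have "oint s t (\<lambda>\<rho>. max (g \<rho>) 0) = Gp t - Gp s" using s by (simp add: oint_eq Gp_split)
        moreover have "exp (2 * (Gp t - Gp s)) = exp (2 * Gp t) * exp (-2 * Gp s)"
          by (simp add: exp_add[symmetric] algebra_simps)
        ultimately show "exp (2 * oint s t (\<lambda>\<rho>. max (g \<rho>) 0)) * f s = exp (2 * Gp t) * (exp (-2 * Gp s) * f s)"
          by simp
      qed
      thus ?thesis by (simp add: integral_cmult_real E1_def)
    qed
    have eq: "oint a b (\<lambda>t. 1 / sqrt (2 * oint a t (\<lambda>s. exp (2 * oint s t (\<lambda>\<rho>. max (g \<rho>) 0)) * f s)))
        = integral {a..b} k"
      using ab by (auto simp: oint_eq[of a b] k_def inner intro!: integral_cong)
    have "integral {a..\<phi> r} k \<le> 1 * r"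
    proof (rule int_lower[OF r0 phi_cont[OF r(2)] phi0])
      show "(\<phi> has_real_derivative p s) (at s)" if "0 < s" "s < r" for s using dphi that r by simp
      show "a < \<phi> s \<and> \<phi> s < \<phi> r" if "0 < s" "s < r" for s using phi_in[OF that r(2)] by simp
      have "continuous_on {a<..\<phi> r} (\<lambda>t. 1 / sqrt (2 * (exp (2 * Gp t) * E1 t)))"
      proof (intro continuous_intros)
        show "continuous_on {a<..\<phi> r} Gp" by (rule continuous_on_subset[OF Gp_cont]) auto
        show "continuous_on {a<..\<phi> r} E1" unfolding E1_def by (rule continuous_on_subset[OF IH_cont[OF E1c]]) auto
      qed (use E1_pos in fastforce)
      thus "continuous_on {a<..\<phi> r} k" by (simp add: k_def)
      fix s assume s: "0 < s" "s < r"
      have sR: "s < R" using s r by simp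
      have H: "0 < 2 * (exp (2 * Gp (\<phi> s)) * E1 (\<phi> s))" using Hpos phi_in[OF s r(2)] by simp
      have "(p s)^2 \<le> 2 * (exp (2 * Gp (\<phi> s)) * E1 (\<phi> s))"
        using part1_eq[OF q2 s(1) sR] by simp
      hence "p s \<le> sqrt (2 * (exp (2 * Gp (\<phi> s)) * E1 (\<phi> s)))"
        using p_pos[OF s(1) sR] real_le_rsqrt by blast
      thus "p s * k (\<phi> s) \<le> 1" using H by (simp add: k_def divide_le_eq)
    qed simp
    thus ?thesis using False eq by (simp add: b_def)
  qed
qed

end

context odes begin

definition RHS where "RHS u = f (\<phi> u) + g (\<phi> u) * p u powr q"

lemma ode': "0 < u \<Longrightarrow> u < R \<Longrightarrow> pp u = RHS u - (c-1)/u * p u"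
  using ode p_abs by (simp add: RHS_def algebra_simps)

lemma gphi_mono: "0 \<le> s \<Longrightarrow> s \<le> t \<Longrightarrow> t < R \<Longrightarrow> g (\<phi> s) \<le> g (\<phi> t)"
  using phi_less[of s t] g_mono by (cases "s = t") (auto simp: mono_def)

lemma fphi_mono: "0 \<le> s \<Longrightarrow> s \<le> t \<Longrightarrow> t < R \<Longrightarrow> f (\<phi> s) \<le> f (\<phi> t)"
  using phi_less[of s t] f_mono by (cases "s = t") (auto simp: mono_def)

lemma good_bound:
  assumes r: "0 < r" "r < R" and gr: "0 \<le> g (\<phi> r)"
    and H: "\<And>s. 0 < s \<Longrightarrow> s < r \<Longrightarrow> 0 \<le> g (\<phi> s) \<Longrightarrow> 0 \<le> pp s"
  shows "p r \<le> r * RHS r / c" "RHS r / c \<le> pp r"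
proof -
  have rhs_le: "RHS s \<le> RHS r" if s: "0 < s" "s \<le> r" for s
  proof (cases "0 \<le> g (\<phi> s)")
    case False
    have "RHS s \<le> f (\<phi> s)" using False p_pos[of s] s r
      by (auto simp: RHS_def mult_nonpos_nonneg)
    also have "\<dots> \<le> f (\<phi> r)" using fphi_mono[of s r] s r by simp
    also have "\<dots> \<le> RHS r" using gr by (simp add: RHS_def)
    finally show ?thesis .
  next
    case True
    have "p s \<le> p r"
    proof (rule DERIV_nonneg_imp_increasing_open[OF s(2)])
      fix x assume x: "s < x" "x < r"
      have "0 \<le> g (\<phi> x)" using True gphi_mono[of s x] x s r by simp
      hence "0 \<le> pp x" using H[of x] x s by simp
      thus "\<exists>y. DERIV p x :> y \<and> 0 \<le> y" using dp[of x] x s r by auto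
    next
      show "continuous_on {s..r} p"
        using p_isCont s r by (intro continuous_at_imp_continuous_on) auto
    qed
    hence "p s powr q \<le> p r powr q" using p_pos[of s] s r by (intro powr_mono2) (auto simp: less_imp_le q_pos)
    moreover have "g (\<phi> s) \<le> g (\<phi> r)" using gphi_mono[of s r] s r by simp
    ultimately have "g (\<phi> s) * p s powr q \<le> g (\<phi> r) * p r powr q"
      using True by (intro mult_mono) auto
    moreover have "f (\<phi> s) \<le> f (\<phi> r)" using fphi_mono[of s r] s r by simp
    ultimately show ?thesis by (simp add: RHS_def)
  qed
  define K where "K = RHS r"
  define D where "D v = pt v - v * K / c" for v
  have "D r \<le> 0"
  proof (rule sign_le[where D=D and D'="\<lambda>v. pp v - K / c"])
    show "continuous_on {0..r} D" unfolding D_def using c1 by (intro continuous_intros pt_cont[OF r]) auto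
    show "D 0 \<le> 0" by (simp add: D_def pt_def)
    fix v assume v: "0 < v" "v < r"
    have vR: "v < R" using v r by simp
    show "(D has_real_derivative pp v - K / c) (at v)" unfolding D_def
      using dpt[OF v(1) vR] c1 by (auto intro!: derivative_eq_intros)
    assume "0 < D v"
    hence big: "v * K / c \<le> p v" using v by (simp add: D_def pt_def)
    have "(c - 1) * (v * K / c) \<le> (c - 1) * p v" using big c1 by (intro mult_left_mono) auto
    hence "(c - 1) * K / c \<le> (c - 1) / v * p v" using v by (simp add: field_simps)
    moreover have "pp v = RHS v - (c-1)/v * p v" by (rule ode'[OF v(1) vR])
    moreover have "RHS v \<le> K" using rhs_le[of v] v by (simp add: K_def)
    ultimately have "pp v \<le> K - (c - 1) * K / c" by simp
    also have "\<dots> = K / c" using c1 by (simp add: field_simps)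
    finally show "pp v - K / c \<le> 0" by simp
  qed (use r in simp)
  thus pr: "p r \<le> r * RHS r / c" using r by (simp add: D_def pt_def K_def)
  have "(c - 1) / r * p r \<le> (c - 1) / r * (r * RHS r / c)"
    using pr c1 r by (intro mult_left_mono) auto
  also have "\<dots> = (c - 1) * RHS r / c" using r by simp
  finally have "RHS r - (c - 1) * RHS r / c \<le> pp r" using ode'[OF r] by simp
  moreover have "RHS r - (c - 1) * RHS r / c = RHS r / c" using c1 by (simp add: field_simps)
  ultimately show "RHS r / c \<le> pp r" by simp
qed

lemma good_pos: assumes r: "0 < r" "r < R" "0 \<le> g (\<phi> r)" shows "0 < pp r"
proof (rule ccontr)
  assume "\<not> 0 < pp r"
  define B where "B = {x. 0 < x \<and> x < R \<and> 0 \<le> g (\<phi> x) \<and> pp x \<le> 0}"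
  have Bne: "B \<noteq> {}" using r \<open>\<not> 0 < pp r\<close> by (auto simp: B_def)
  have Bbd: "bdd_below B" by (rule bdd_belowI[of _ 0]) (auto simp: B_def)
  define T where "T = Inf B"
  obtain d where d: "0 < d" "d \<le> R" "\<And>s. 0 < s \<Longrightarrow> s < d \<Longrightarrow> 0 < pp s"
    using pp_pos_near0 by blast
  have dB: "d \<le> z" if "z \<in> B" for z using d(3)[of z] that by (force simp: B_def)
  have Td: "d \<le> T" unfolding T_def using Bne dB by (rule cInf_greatest)
  have TR: "T < R"
  proof -
    obtain z where "z \<in> B" using Bne by auto
    hence "T \<le> z" "z < R" using Bbd by (auto simp: T_def B_def intro: cInf_lower)
    thus ?thesis by simp
  qed
  have T0: "0 < T" using Td d by simp
  have below: "0 < pp s" if "0 < s" "s < T" "0 \<le> g (\<phi> s)" for s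
  proof (rule ccontr)
    assume "\<not> 0 < pp s"
    hence "s \<in> B" using that TR by (auto simp: B_def)
    hence "T \<le> s" using Bbd by (auto simp: T_def intro: cInf_lower)
    thus False using that by simp
  qed
  have ev: "eventually (\<lambda>y. y \<notin> B) (nhds T)"
  proof (cases "0 \<le> g (\<phi> T)")
    case True
    have "RHS T / c \<le> pp T"
      by (rule good_bound(2)[OF T0 TR True]) (use below in \<open>auto simp: less_imp_le\<close>)
    moreover have "0 < RHS T / c"
      using f_pos[of "\<phi> T"] True c1 by (simp add: RHS_def add_pos_nonneg)
    ultimately have "0 < pp T" by simp
    from order_tendstoD(1)[OF pp_isCont[OF T0 TR, unfolded isCont_def] this]
    have "eventually (\<lambda>y. 0 < pp y) (at T)" .
    hence "eventually (\<lambda>y. y = T \<or> 0 < pp y) (nhds T)"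
      unfolding eventually_at_filter by (rule eventually_mono) auto
    thus ?thesis by (rule eventually_mono) (use \<open>0 < pp T\<close> in \<open>auto simp: B_def\<close>)
  next
    case False
    have "isCont (\<lambda>y. g (\<phi> y)) T"
      using isCont_o2[OF phi_isCont[OF T0 TR]] g_cont by (metis continuous_on_eq_continuous_at open_UNIV UNIV_I)
    from order_tendstoD(2)[OF this[unfolded isCont_def], of 0] False
    have "eventually (\<lambda>y. g (\<phi> y) < 0) (at T)" by simp
    hence "eventually (\<lambda>y. g (\<phi> y) < 0) (nhds T)"
      using False unfolding eventually_at_filter by (auto elim!: eventually_mono)
    thus ?thesis by (rule eventually_mono) (auto simp: B_def)
  qed
  then obtain e where e: "0 < e" "\<And>y. dist y T < e \<Longrightarrow> y \<notin> B"
    by (auto simp: eventually_nhds_metric)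
  obtain z where z: "z \<in> B" "z < T + e" using cInf_lessD[OF Bne, of "T + e"] e by (auto simp: T_def)
  have "T \<le> z" using z Bbd by (auto simp: T_def intro: cInf_lower)
  hence "dist z T < e" using z by (simp add: dist_real_def)
  thus False using e(2) z by blast
qed

lemma good:
  assumes "0 < r" "r < R" "0 \<le> g (\<phi> r)"
  shows "p r \<le> r * RHS r / c" "RHS r / c \<le> pp r"
proof -
  have H: "\<And>s. 0 < s \<Longrightarrow> s < r \<Longrightarrow> 0 \<le> g (\<phi> s) \<Longrightarrow> 0 \<le> pp s"
    using good_pos assms by (simp add: less_imp_le)
  show "p r \<le> r * RHS r / c" by (rule good_bound(1)[OF assms H])
  show "RHS r / c \<le> pp r" by (rule good_bound(2)[OF assms H])
qed

end

lemma ln_over_le: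
  fixes y :: real assumes y: "0 < y" "y \<le> 2"
  shows "ln y / y \<le> ln 2 / 2"
proof (rule DERIV_nonneg_imp_increasing_open[OF y(2), where f="\<lambda>x. ln x / x"])
  fix x :: real assume x: "y < x" "x < 2"
  have xp: "0 < x" using x y by simp
  have "ln x \<le> ln 2" using x xp by simp
  hence "ln x < 1" using ln_2_less_1 by simp
  hence "0 \<le> (1 - ln x) / x^2" using xp by simp
  moreover have "((\<lambda>x. ln x / x) has_real_derivative (1 - ln x) / x^2) (at x)"
    using xp by (auto intro!: derivative_eq_intros simp: field_simps power2_eq_square)
  ultimately show "\<exists>d. ((\<lambda>x. ln x / x) has_real_derivative d) (at x) \<and> 0 \<le> d" by blast
next
  show "continuous_on {y..2} (\<lambda>x. ln x / x)" using y by (intro continuous_intros) auto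
qed

lemma key_const:
  fixes q c :: real assumes q: "0 < q" "q < 2" and c: "1 \<le> c"
  shows "((2 - q) / c) powr (1 / (2 - q)) \<le> sqrt (2 / c)"
proof -
  define y where "y = 2 - q"
  have y: "0 < y" "y \<le> 2" using q by (auto simp: y_def)
  have "y powr (1 / y) = exp (ln y / y)" using y by (simp add: powr_def)
  also have "\<dots> \<le> exp (ln 2 / 2)" using ln_over_le[OF y] by simp
  also have "\<dots> = sqrt 2" by (simp add: powr_def[symmetric] powr_half_sqrt[symmetric] powr_def)
  finally have A: "y powr (1 / y) \<le> sqrt 2" .
  have "1/2 \<le> 1 / y" using y by (simp add: field_simps)
  hence B: "c powr (1/2) \<le> c powr (1 / y)" using c by (intro powr_mono) auto
  have cp: "0 < c powr (1/2)" using c by simp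
  have "((2 - q) / c) powr (1 / (2 - q)) = y powr (1 / y) / c powr (1 / y)"
    by (simp add: y_def powr_divide)
  also have "\<dots> \<le> sqrt 2 / c powr (1/2)"
    using A B cp y by (intro frac_le) auto
  also have "\<dots> = sqrt (2 / c)" using c by (simp add: powr_half_sqrt real_sqrt_divide)
  finally show ?thesis .
qed

context odes begin

definition E2 where "E2 t = integral {a..t} (\<lambda>s. exp (-(2/c) * Gp s) * f s)"

lemma E2c: "continuous_on {a..b} (\<lambda>s. exp (-(2/c) * Gp s) * f s)"
  by (intro continuous_intros Gp_cont fc)

lemma E2_lower: assumes "a \<le> t" shows "exp (-(2/c) * Gp t) * f a * (t - a) \<le> E2 t"
  unfolding E2_def
proof (rule IH_lower[OF E2c])
  fix x assume x: "a \<le> x" "x \<le> t"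
  have "exp (-(2/c) * Gp t) \<le> exp (-(2/c) * Gp x)" using Gp_mono[OF x] c1 by (simp add: divide_right_mono)
  moreover have "f a \<le> f x" using f_mono x by (auto simp: mono_def)
  ultimately show "exp (-(2/c) * Gp t) * f a \<le> exp (-(2/c) * Gp x) * f x"
    using f_pos by (intro mult_mono) (auto simp: less_imp_le)
qed (use assms in auto)

lemma ga_good: assumes "0 \<le> g a" "0 < u" "u < R" shows "0 \<le> g (\<phi> u)"
  using gphi_mono[of 0 u] assms phi0 by simp

lemma pp_lower2: assumes "0 \<le> g a" "0 < u" "u < R"
  shows "(f (\<phi> u) + g (\<phi> u) * p u powr q) / c \<le> pp u"
  using good(2)[OF assms(2,3) ga_good[OF assms]] by (simp add: RHS_def)

lemma part2_F: assumes ga: "0 \<le> g a" and r: "0 < r" "r < R"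
  shows "(2/c) * Fi (\<phi> r) \<le> (p r)^2"
proof -
  define D where "D u = (2/c) * Fi (\<phi> u) - (pt u)^2" for u
  have "D r \<le> 0"
  proof (rule sign_le[where D=D and D'="\<lambda>u. (2/c) * (f (\<phi> u) * p u) - 2 * pt u * pp u"])
    show "continuous_on {0..r} D" unfolding D_def Fi_def
      by (intro continuous_intros pt_cont[OF r] comp_cont[OF IH_cont[OF fc] r(2)])
    show "D 0 \<le> 0" by (simp add: D_def pt_def Fi_def phi0)
    fix u assume u: "0 < u" "u < r"
    have uR: "u < R" using u r by simp
    have t1: "(pt has_real_derivative pp u) (at u)" by (rule dpt[OF u(1) uR])
    have d2: "((\<lambda>x. integral {a..\<phi> x} f) has_real_derivative f (\<phi> u) * p u) (at u)"
      by (rule comp_deriv[OF fc u r(2)])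
    show "(D has_real_derivative (2/c) * (f (\<phi> u) * p u) - 2 * pt u * pp u) (at u)"
      unfolding D_def Fi_def by (intro derivative_eq_intros) (rule t1 d2 | simp)+
    have pos: "0 < p u" by (rule p_pos[OF u(1) uR])
    have "0 \<le> g (\<phi> u) * p u powr q" using ga_good[OF ga u(1) uR] by simp
    hence "f (\<phi> u) / c \<le> pp u" using pp_lower2[OF ga u(1) uR] c1
      by (smt (verit, ccfv_SIG) divide_right_mono)
    hence "f (\<phi> u) / c * p u \<le> pp u * p u" using pos
      by (intro mult_right_mono) auto
    moreover have "(2/c) * (f (\<phi> u) * p u) = 2 * (f (\<phi> u) / c * p u)" by simp
    moreover have "2 * pt u * pp u = 2 * (pp u * p u)" using u by (simp add: pt_def)
    ultimately show "(2/c) * (f (\<phi> u) * p u) - 2 * pt u * pp u \<le> 0" by linarith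
  qed (use r in simp)
  thus ?thesis using r by (simp add: D_def pt_def)
qed

lemma part2_G: assumes ga: "0 \<le> g a" and q2: "q < 2" and r: "0 < r" "r < R"
  shows "((2-q)/c) * Gp (\<phi> r) \<le> p r powr (2-q)"
proof -
  define D where "D u = ((2-q)/c) * Gp (\<phi> u) - pt u powr (2-q)" for u
  have "D r \<le> 0"
  proof (rule sign_le[where D=D and D'="\<lambda>u. ((2-q)/c) * (max (g (\<phi> u)) 0 * p u) - (2-q) * pt u powr (2-q-1) * pp u"])
    have ptc: "continuous_on {0..r} (\<lambda>u. pt u powr (2-q))"
      by (rule continuous_on_powr'[OF pt_cont[OF r] continuous_on_const])
         (use q2 p_pos r in \<open>auto simp: pt_def less_imp_le\<close>)
    show "continuous_on {0..r} D" unfolding D_def Gp_def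
      by (intro continuous_intros ptc comp_cont[OF IH_cont[OF gpc] r(2)])
    show "D 0 \<le> 0" by (simp add: D_def pt_def Gp_def phi0)
    fix u assume u: "0 < u" "u < r"
    have uR: "u < R" using u r by simp
    have pos: "0 < p u" by (rule p_pos[OF u(1) uR])
    have pu: "pt u = p u" using u by (simp add: pt_def)
    have t1: "((\<lambda>x. pt x powr (2-q)) has_real_derivative (2-q) * pt u powr (2-q-1) * pp u) (at u)"
      using DERIV_chain2[OF has_real_derivative_powr[of "pt u" "2-q"] dpt[OF u(1) uR]] pos pu by simp
    have d3: "((\<lambda>x. integral {a..\<phi> x} (\<lambda>s. max (g s) 0)) has_real_derivative max (g (\<phi> u)) 0 * p u) (at u)"
      by (rule comp_deriv[OF gpc u r(2)])
    show "(D has_real_derivative ((2-q)/c) * (max (g (\<phi> u)) 0 * p u) - (2-q) * pt u powr (2-q-1) * pp u) (at u)"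
      unfolding D_def Gp_def using DERIV_diff[OF DERIV_cmult[OF d3, of "(2-q)/c"] t1] by simp
    have gg: "0 \<le> g (\<phi> u)" by (rule ga_good[OF ga u(1) uR])
    have "g (\<phi> u) * p u powr q / c \<le> pp u" using pp_lower2[OF ga u(1) uR] f_pos[of "\<phi> u"] c1
      by (smt (verit, ccfv_SIG) divide_right_mono)
    hence "p u powr (1-q) * (g (\<phi> u) * p u powr q / c) \<le> p u powr (1-q) * pp u"
      by (intro mult_left_mono) auto
    moreover have "p u powr (1-q) * (g (\<phi> u) * p u powr q / c) = g (\<phi> u) * p u / c"
    proof -
      have e: "p u powr (1-q) * p u powr q = p u" using pos by (simp add: powr_add[symmetric])
      have "p u powr (1-q) * (g (\<phi> u) * p u powr q / c) = g (\<phi> u) * (p u powr (1-q) * p u powr q) / c"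
        by (simp add: algebra_simps)
      also have "\<dots> = g (\<phi> u) * p u / c" using e by simp
      finally show ?thesis .
    qed
    ultimately have "g (\<phi> u) * p u / c \<le> p u powr (1-q) * pp u" by linarith
    hence "(2-q) * (g (\<phi> u) * p u / c) \<le> (2-q) * (p u powr (1-q) * pp u)"
      using q2 by (intro mult_left_mono) auto
    thus "((2-q)/c) * (max (g (\<phi> u)) 0 * p u) - (2-q) * pt u powr (2-q-1) * pp u \<le> 0"
      using gg pu by (simp add: field_simps)
  qed (use r in simp)
  thus ?thesis using r by (simp add: D_def pt_def)
qed

lemma part2_eq: assumes ga: "0 \<le> g a" and q2: "q = 2" and r: "0 < r" "r < R"
  shows "(2/c) * (exp ((2/c) * Gp (\<phi> r)) * E2 (\<phi> r)) \<le> (p r)^2"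
proof -
  define D where "D u = (2/c) * E2 (\<phi> u) - exp (-(2/c) * Gp (\<phi> u)) * (pt u)^2" for u
  have Dle: "D r \<le> 0"
  proof (rule sign_le[where D=D and D'="\<lambda>u. (2/c) * (exp (-(2/c) * Gp (\<phi> u)) * f (\<phi> u) * p u)
       - (exp (-(2/c) * Gp (\<phi> u)) * (-(2/c) * (max (g (\<phi> u)) 0 * p u)) * (pt u)^2
        + exp (-(2/c) * Gp (\<phi> u)) * (2 * pt u * pp u))"])
    show "continuous_on {0..r} D" unfolding D_def E2_def
      by (intro continuous_intros pt_cont[OF r] comp_cont[OF IH_cont[OF E2c] r(2)] comp_cont[OF Gp_cont r(2)])
    show "D 0 \<le> 0" by (simp add: D_def pt_def E2_def phi0)
    fix u assume u: "0 < u" "u < r"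
    have uR: "u < R" using u r by simp
    have t1: "(pt has_real_derivative pp u) (at u)" by (rule dpt[OF u(1) uR])
    have d2: "((\<lambda>x. integral {a..\<phi> x} (\<lambda>s. exp (-(2/c) * Gp s) * f s)) has_real_derivative exp (-(2/c) * Gp (\<phi> u)) * f (\<phi> u) * p u) (at u)"
      by (rule comp_deriv[OF E2c u r(2)])
    have d3: "((\<lambda>x. integral {a..\<phi> x} (\<lambda>s. max (g s) 0)) has_real_derivative max (g (\<phi> u)) 0 * p u) (at u)"
      by (rule comp_deriv[OF gpc u r(2)])
    hence d3': "((\<lambda>x. Gp (\<phi> x)) has_real_derivative max (g (\<phi> u)) 0 * p u) (at u)"
      by (simp add: Gp_def)
    show "(D has_real_derivative (2/c) * (exp (-(2/c) * Gp (\<phi> u)) * f (\<phi> u) * p u)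
       - (exp (-(2/c) * Gp (\<phi> u)) * (-(2/c) * (max (g (\<phi> u)) 0 * p u)) * (pt u)^2
        + exp (-(2/c) * Gp (\<phi> u)) * (2 * pt u * pp u))) (at u)"
    proof -
      have dexp: "((\<lambda>x. exp (-(2/c) * Gp (\<phi> x))) has_real_derivative exp (-(2/c) * Gp (\<phi> u)) * (-(2/c) * (max (g (\<phi> u)) 0 * p u))) (at u)"
        using DERIV_chain2[OF DERIV_exp DERIV_cmult[OF d3', of "-(2/c)"]] by simp
      have dsq: "((\<lambda>x. (pt x)^2) has_real_derivative 2 * pt u * pp u) (at u)"
        using DERIV_power[OF t1, of 2] by (simp add: algebra_simps)
      show ?thesis using DERIV_diff[OF DERIV_cmult[OF d2, of "2/c"] DERIV_mult[OF dexp dsq]]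
        unfolding D_def E2_def by (simp add: mult_ac)
    qed
    have pu: "pt u = p u" using u by (simp add: pt_def)
    have pos: "0 < p u" by (rule p_pos[OF u(1) uR])
    have gg: "0 \<le> g (\<phi> u)" by (rule ga_good[OF ga u(1) uR])
    have ppu: "(f (\<phi> u) + g (\<phi> u) * (p u)^2) / c \<le> pp u"
      using pp_lower2[OF ga u(1) uR] q2 powr2[OF pos] by simp
    hence "(f (\<phi> u) + g (\<phi> u) * (p u)^2) / c - pp u \<le> 0" by simp
    hence "2 * exp (-(2/c) * Gp (\<phi> u)) * p u * ((f (\<phi> u) + g (\<phi> u) * (p u)^2) / c - pp u) \<le> 0"
      using pos by (simp add: mult_nonneg_nonpos)
    thus "(2/c) * (exp (-(2/c) * Gp (\<phi> u)) * f (\<phi> u) * p u)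
       - (exp (-(2/c) * Gp (\<phi> u)) * (-(2/c) * (max (g (\<phi> u)) 0 * p u)) * (pt u)^2
        + exp (-(2/c) * Gp (\<phi> u)) * (2 * pt u * pp u)) \<le> 0"
      unfolding pu using gg by (simp add: algebra_simps power2_eq_square add_divide_distrib)
  qed (use r in simp)
  hence "(2/c) * E2 (\<phi> r) \<le> exp (-(2/c) * Gp (\<phi> r)) * (p r)^2" using r by (simp add: D_def pt_def)
  hence "exp ((2/c) * Gp (\<phi> r)) * ((2/c) * E2 (\<phi> r)) \<le> exp ((2/c) * Gp (\<phi> r)) * (exp (-(2/c) * Gp (\<phi> r)) * (p r)^2)"
    by (intro mult_left_mono) auto
  thus ?thesis by (simp add: exp_minus field_simps)
qed

end

lemma inv_sqrt_bound:
  fixes S K t a :: real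
  assumes "0 < K" "a < t" "K * (t - a) \<le> S"
  shows "1 / sqrt S \<le> (1 / sqrt K) / sqrt (t - a)"
proof -
  have "sqrt (K * (t - a)) \<le> sqrt S" using assms by simp
  moreover have "0 < sqrt (K * (t - a))" using assms by simp
  ultimately have "1 / sqrt S \<le> 1 / sqrt (K * (t - a))" by (intro divide_left_mono) auto
  thus ?thesis by (simp add: real_sqrt_mult)
qed

context odes begin

lemma part2:
  assumes ga: "0 \<le> g a" and r: "0 \<le> r" "r < R"
  shows "r \<le>
        (if q < 2 then
           2 * (c / (2 - q)) powr (1 / (2 - q)) *
             oint a (\<phi> r) (\<lambda>t. 1 / (sqrt (oint a t f) + (oint a t (\<lambda>s. max (g s) 0)) powr (1 / (2 - q))))
         else
           sqrt (c / 2) *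
             oint a (\<phi> r) (\<lambda>t. 1 / sqrt (oint a t (\<lambda>s. exp (2 / c * oint s t (\<lambda>\<tau>. max (g \<tau>) 0)) * f s))))"
proof (cases "r = 0")
  case True thus ?thesis by (simp add: phi0 oint_def)
next
  case False
  hence r0: "0 < r" using r by simp
  define b where "b = \<phi> r"
  have ab: "a < b" using b_gt[OF r0 r(2)] by (simp add: b_def)
  have phid: "(\<phi> has_real_derivative p s) (at s)" if "0 < s" "s < r" for s using dphi that r by simp
  have phir: "a < \<phi> s \<and> \<phi> s < \<phi> r" if "0 < s" "s < r" for s using phi_in[OF that r(2)] by simp
  have fa: "0 < f a" by (rule f_pos)
  show ?thesis
  proof (cases "q < 2")
    case True
    define \<kappa> where "\<kappa> = ((2 - q) / c) powr (1 / (2 - q))"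
    have kpos: "0 < \<kappa>" using True c1 by (simp add: \<kappa>_def)
    have kle: "\<kappa> \<le> sqrt (2 / c)" unfolding \<kappa>_def by (rule key_const[OF q_pos True c1])
    define k where "k t = 1 / (sqrt (Fi t) + Gp t powr (1 / (2 - q)))" for t
    have Spos: "0 < sqrt (Fi t) + Gp t powr (1 / (2 - q))" if "a < t" for t
      using Fi_pos[OF that] by (simp add: add_pos_nonneg)
    have eq: "oint a b (\<lambda>t. 1 / (sqrt (oint a t f) + (oint a t (\<lambda>s. max (g s) 0)) powr (1 / (2 - q))))
        = integral {a..b} k"
      using ab by (auto simp: oint_eq k_def Fi_def Gp_def intro!: integral_cong)
    have c1': "continuous_on {a<..\<phi> r} Fi" by (rule continuous_on_subset[OF Fi_cont]) auto
    have c2: "continuous_on {a<..\<phi> r} Gp" by (rule continuous_on_subset[OF Gp_cont]) auto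
    have c3: "continuous_on {a<..\<phi> r} (\<lambda>t. Gp t powr (1 / (2 - q)))"
      by (rule continuous_on_powr'[OF c2 continuous_on_const]) (use Gp_nonneg True in simp)
    have c4: "\<forall>t\<in>{a<..\<phi> r}. sqrt (Fi t) + Gp t powr (1 / (2 - q)) \<noteq> 0"
      using Spos by (metis greaterThanAtMost_iff less_irrefl)
    have kc: "continuous_on {a<..\<phi> r} k" unfolding k_def
      by (intro continuous_on_divide continuous_on_add continuous_on_const continuous_on_real_sqrt c1' c3 c4)
    have ki: "k integrable_on {a..\<phi> r}"
    proof (rule integrable_dom[OF _ kc])
      show "a \<le> \<phi> r" using ab by (simp add: b_def)
      fix t assume t: "a < t" "t \<le> \<phi> r"
      have "1 / (sqrt (Fi t) + Gp t powr (1 / (2 - q))) \<le> 1 / sqrt (Fi t)"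
        using Fi_pos[OF t(1)] Spos[OF t(1)] by (intro divide_left_mono mult_pos_pos) auto
      also have "\<dots> \<le> (1 / sqrt (f a)) / sqrt (t - a)"
        by (rule inv_sqrt_bound[OF fa t(1) Fi_lower]) (use t in simp)
      finally show "0 \<le> k t \<and> k t \<le> (1 / sqrt (f a)) / sqrt (t - a)"
        using Spos[OF t(1)] by (simp add: k_def)
    qed
    have "\<kappa> / 2 * r \<le> integral {a..\<phi> r} k"
    proof (rule int_upper[OF r0 phi_cont[OF r(2)] phi0 phid phir kc ki])
      fix s assume s: "0 < s" "s < r"
      have sR: "s < R" using s r by simp
      have ps: "0 < p s" by (rule p_pos[OF s(1) sR])
      have S: "0 < sqrt (Fi (\<phi> s)) + Gp (\<phi> s) powr (1 / (2 - q))" using Spos phir[OF s] by simp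
      have "sqrt ((2/c) * Fi (\<phi> s)) \<le> sqrt ((p s)^2)"
        by (rule real_sqrt_le_mono[OF part2_F[OF ga s(1) sR]])
      hence A: "sqrt (2/c) * sqrt (Fi (\<phi> s)) \<le> p s" using ps by (simp add: real_sqrt_mult[symmetric])
      have "(((2-q)/c) * Gp (\<phi> s)) powr (1 / (2 - q)) \<le> (p s powr (2-q)) powr (1 / (2 - q))"
        using part2_G[OF ga True s(1) sR] True c1 Gp_nonneg by (intro powr_mono2) auto
      also have "\<dots> = p s" using True ps by (simp add: powr_powr)
      moreover have "(((2-q)/c) * Gp (\<phi> s)) powr (1 / (2 - q)) = \<kappa> * Gp (\<phi> s) powr (1 / (2 - q))"
        unfolding \<kappa>_def using True c1 Gp_nonneg[of "\<phi> s"] by (intro powr_mult)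
      ultimately have B: "\<kappa> * Gp (\<phi> s) powr (1 / (2 - q)) \<le> p s" by simp
      have "\<kappa> * sqrt (Fi (\<phi> s)) \<le> sqrt (2/c) * sqrt (Fi (\<phi> s))"
        using kle Fi_nonneg by (intro mult_right_mono) auto
      with A B have "\<kappa> * (sqrt (Fi (\<phi> s)) + Gp (\<phi> s) powr (1 / (2 - q))) \<le> 2 * p s"
        by (simp add: algebra_simps)
      hence "\<kappa> / 2 \<le> p s / (sqrt (Fi (\<phi> s)) + Gp (\<phi> s) powr (1 / (2 - q)))"
        using S by (simp add: field_simps)
      thus "\<kappa> / 2 \<le> p s * k (\<phi> s)" by (simp add: k_def)
    qed
    hence "r \<le> (2 / \<kappa>) * integral {a..b} k" using kpos by (simp add: b_def field_simps)
    moreover have "2 / \<kappa> = 2 * (c / (2 - q)) powr (1 / (2 - q))"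
      using True c1 by (simp add: \<kappa>_def powr_divide)
    ultimately show ?thesis using True eq by (simp add: b_def)
  next
    case False
    hence q2: "q = 2" using q_le by simp
    define H where "H t = exp ((2/c) * Gp t) * E2 t" for t
    define k where "k t = 1 / sqrt (H t)" for t
    have Hlow: "f a * (t - a) \<le> H t" if "a \<le> t" for t
    proof -
      have e1: "exp ((2/c) * Gp t) * exp (-(2/c) * Gp t) = 1" by (simp add: exp_add[symmetric])
      have "f a * (t - a) = exp ((2/c) * Gp t) * (exp (-(2/c) * Gp t) * f a * (t - a))"
        using e1 by (metis mult.assoc mult_1)
      also have "\<dots> \<le> exp ((2/c) * Gp t) * E2 t"
        using E2_lower[OF that] by (intro mult_left_mono) auto
      finally show ?thesis by (simp add: H_def)
    qed
    have Hpos: "0 < H t" if "a < t" for t using Hlow[of t] that fa by (smt (verit) mult_pos_pos)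
    have inner: "oint a t (\<lambda>s. exp (2 / c * oint s t (\<lambda>\<tau>. max (g \<tau>) 0)) * f s) = H t"
      if t: "a \<le> t" for t
    proof -
      have "oint a t (\<lambda>s. exp (2 / c * oint s t (\<lambda>\<tau>. max (g \<tau>) 0)) * f s)
          = integral {a..t} (\<lambda>s. exp ((2/c) * Gp t) * (exp (-(2/c) * Gp s) * f s))"
      proof (simp only: oint_eq[OF t], rule integral_cong)
        fix s assume s: "s \<in> {a..t}"
        have "oint s t (\<lambda>\<rho>. max (g \<rho>) 0) = Gp t - Gp s" using s by (simp add: oint_eq Gp_split)
        moreover have "exp (2 / c * (Gp t - Gp s)) = exp ((2/c) * Gp t) * exp (-(2/c) * Gp s)"
          by (simp add: exp_add[symmetric] algebra_simps)
        ultimately show "exp (2 / c * oint s t (\<lambda>\<tau>. max (g \<tau>) 0)) * f s = exp ((2/c) * Gp t) * (exp (-(2/c) * Gp s) * f s)"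
          by simp
      qed
      thus ?thesis by (simp add: integral_cmult_real E2_def H_def)
    qed
    have eq: "oint a b (\<lambda>t. 1 / sqrt (oint a t (\<lambda>s. exp (2 / c * oint s t (\<lambda>\<tau>. max (g \<tau>) 0)) * f s)))
        = integral {a..b} k"
      unfolding oint_eq[OF less_imp_le[OF ab]] k_def
      by (rule integral_cong) (metis inner atLeastAtMost_iff)
    have Hc: "continuous_on {a<..\<phi> r} H" unfolding H_def
    proof (intro continuous_intros)
      show "continuous_on {a<..\<phi> r} Gp" by (rule continuous_on_subset[OF Gp_cont]) auto
      show "continuous_on {a<..\<phi> r} E2" unfolding E2_def by (rule continuous_on_subset[OF IH_cont[OF E2c]]) auto
    qed
    have kc: "continuous_on {a<..\<phi> r} k" unfolding k_def
      by (intro continuous_intros Hc) (use Hpos in fastforce)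
    have ki: "k integrable_on {a..\<phi> r}"
    proof (rule integrable_dom[OF _ kc])
      show "a \<le> \<phi> r" using ab by (simp add: b_def)
      fix t assume t: "a < t" "t \<le> \<phi> r"
      have "k t \<le> (1 / sqrt (f a)) / sqrt (t - a)" unfolding k_def
        by (rule inv_sqrt_bound[OF fa t(1) Hlow]) (use t in simp)
      thus "0 \<le> k t \<and> k t \<le> (1 / sqrt (f a)) / sqrt (t - a)" using Hpos[OF t(1)] by (simp add: k_def)
    qed
    have "sqrt (2/c) * r \<le> integral {a..\<phi> r} k"
    proof (rule int_upper[OF r0 phi_cont[OF r(2)] phi0 phid phir kc ki])
      fix s assume s: "0 < s" "s < r"
      have sR: "s < R" using s r by simp
      have ps: "0 < p s" by (rule p_pos[OF s(1) sR])
      have Hs: "0 < H (\<phi> s)" using Hpos phir[OF s] by simp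
      have "sqrt ((2/c) * H (\<phi> s)) \<le> sqrt ((p s)^2)"
        using real_sqrt_le_mono[OF part2_eq[OF ga q2 s(1) sR]] by (simp add: H_def)
      hence "sqrt (2/c) * sqrt (H (\<phi> s)) \<le> p s" using ps by (simp add: real_sqrt_mult[symmetric])
      thus "sqrt (2/c) \<le> p s * k (\<phi> s)" using Hs by (simp add: k_def field_simps)
    qed
    hence "r \<le> sqrt (c / 2) * integral {a..b} k"
      using c1 by (simp add: b_def field_simps real_sqrt_divide)
    thus ?thesis using False eq by (simp add: b_def)
  qed
qed

end

lemma young_q:
  fixes q c gm F w :: real
  assumes q: "0 < q" "q \<le> 2" and c: "1 \<le> c" and gm: "0 \<le> gm" and F: "0 < F" and w: "0 \<le> w"
  shows "gm * w powr (q/2) \<le> (q/2) * c powr (2/q - 1) * ((gm / F) powr (2/q) * F) * w + ((2-q)/(2*c)) * F"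
proof (cases "gm = 0 \<or> w = 0")
  case True
  have "0 \<le> (q/2) * c powr (2/q - 1) * ((gm / F) powr (2/q) * F) * w" using q gm F w by simp
  moreover have "0 \<le> ((2-q)/(2*c)) * F" using q c F by simp
  ultimately show ?thesis using True by auto
next
  case False
  hence gp: "0 < gm" and wp: "0 < w" using gm w by auto
  define A where "A = c powr (2/q - 1) * ((gm / F) powr (2/q) * F) * w"
  define B where "B = F / c"
  have Ap: "0 < A" using gp wp F c by (simp add: A_def)
  have Bp: "0 < B" using F c by (simp add: B_def)
  have Y: "A powr (q/2) * B powr (1 - q/2) \<le> (q/2) * A + (1 - q/2) * B"
    by (rule Youngs_inequality_0) (use q Ap Bp in auto)
  have "ln (A powr (q/2) * B powr (1 - q/2)) = ln (gm * w powr (q/2))"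
  proof -
    have lA: "ln A = (2/q - 1) * ln c + (2/q) * (ln gm - ln F) + ln F + ln w"
      using gp wp F c by (simp add: A_def ln_mult ln_div)
    have lB: "ln B = ln F - ln c" using F c by (simp add: B_def ln_div)
    have "ln (A powr (q/2) * B powr (1 - q/2)) = (q/2) * ln A + (1 - q/2) * ln B"
      using Ap Bp by (simp add: ln_mult)
    also have "\<dots> = ln gm + (q/2) * ln w"
      unfolding lA lB using q by (simp add: field_simps)
    also have "\<dots> = ln (gm * w powr (q/2))" using gp wp by (simp add: ln_mult)
    finally show ?thesis .
  qed
  hence "A powr (q/2) * B powr (1 - q/2) = gm * w powr (q/2)"
    using Ap Bp gp wp by (subst (asm) ln_inj_iff) auto
  with Y have "gm * w powr (q/2) \<le> (q/2) * A + (1 - q/2) * B" by simp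
  also have "\<dots> = (q/2) * c powr (2/q - 1) * ((gm / F) powr (2/q) * F) * w + ((2-q)/(2*c)) * F"
    by (simp add: A_def B_def field_simps)
  finally show ?thesis .
qed

lemma alg4:
  fixes q gm F x w :: real
  assumes q: "0 < q" "q \<le> 2" and gm: "0 \<le> gm" and F: "0 < F" and x: "0 \<le> x" and xw: "x \<le> w"
    and hx: "(gm / F) powr (2/q) * F * x \<le> F"
  shows "(gm / F) powr (2/q) * F * x \<le> gm * w powr (q/2)"
proof (cases "gm = 0 \<or> x = 0")
  case True thus ?thesis using gm by auto
next
  case False
  hence gp: "0 < gm" and xp: "0 < x" using gm x by auto
  define z where "z = gm * x powr (q/2) / F"
  have zp: "0 < z" using gp xp F by (simp add: z_def)
  have eq: "(gm / F) powr (2/q) * F * x = F * z powr (2/q)"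
  proof -
    have "z powr (2/q) = (gm / F) powr (2/q) * (x powr (q/2)) powr (2/q)"
      unfolding z_def using gp xp F by (simp add: powr_mult[symmetric] powr_divide)
    also have "(x powr (q/2)) powr (2/q) = x" using q xp by (simp add: powr_powr)
    finally show ?thesis by simp
  qed
  have "z powr (2/q) \<le> 1" using hx eq F by simp
  hence z1: "z \<le> 1"
  proof -
    assume "z powr (2/q) \<le> 1"
    hence "(z powr (2/q)) powr (q/2) \<le> 1 powr (q/2)" using q zp by (intro powr_mono2) auto
    thus "z \<le> 1" using q zp by (simp add: powr_powr)
  qed
  have "z powr (2/q) \<le> z powr 1" using z1 zp q by (intro powr_mono') (auto simp: field_simps)
  hence "F * z powr (2/q) \<le> F * z" using F zp by simp
  also have "F * z = gm * x powr (q/2)" using F by (simp add: z_def)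
  also have "\<dots> \<le> gm * w powr (q/2)" using gm x xw q by (intro mult_left_mono powr_mono2) auto
  finally show ?thesis unfolding eq .
qed

lemma coef:
  fixes q c F X :: real
  assumes q: "0 < q" "q \<le> 2" and c: "1 \<le> c" and X: "0 \<le> X" and FX: "2 * X \<le> F"
  shows "0 \<le> (q/c - min (q/c) (2 * c powr (-2/q))) * F
            + min (q/c) (2 * c powr (-2/q)) * X * (2 - q * c powr (2/q - 1))"
proof -
  define e where "e = c powr (-2/q)"
  define C where "C = c powr (2/q - 1)"
  have ep: "0 < e" using c by (simp add: e_def)
  have qc: "q / c = q * C * e"
  proof -
    have "C * e = c powr (2/q - 1 + -2/q)" unfolding C_def e_def by (rule powr_add[symmetric])
    moreover have "2/q - 1 + -2/q = (-1::real)" by simp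
    ultimately have "C * e = c powr (-1)" by simp
    hence "C * e = 1 / c" using c by (simp add: powr_minus_divide)
    hence "q * C * e = q * (1 / c)" by (simp add: mult.assoc)
    thus ?thesis by simp
  qed
  show ?thesis
  proof (cases "q * C \<le> 2")
    case True
    hence "q/c \<le> 2 * e" using qc ep by (simp add: mult_right_mono)
    hence "min (q/c) (2 * e) = q/c" by simp
    moreover have "0 \<le> q/c * X * (2 - q * C)" using True q c X by simp
    ultimately show ?thesis by (simp add: e_def C_def)
  next
    case False
    hence "2 * e \<le> q/c" using qc ep by (simp add: mult_right_mono)
    hence m: "min (q/c) (2 * e) = 2 * e" by simp
    have "(q/c - 2 * e) * F + 2 * e * X * (2 - q * C) = e * (q * C - 2) * (F - 2 * X)"
      using qc by (simp add: algebra_simps)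
    also have "\<dots> \<ge> 0" using False ep FX by simp
    finally show ?thesis using m by (simp add: e_def C_def)
  qed
qed

context odes begin

definition hh where "hh \<tau> = (max (- g \<tau>) 0 / f \<tau>) powr (2/q) * f \<tau>"

lemma hh_c: "continuous_on S hh"
proof -
  have "continuous_on S (\<lambda>\<tau>. max (- g \<tau>) 0 / f \<tau>)"
    using f_pos by (intro continuous_intros gc fc) (simp add: less_imp_neq[symmetric])
  hence "continuous_on S (\<lambda>\<tau>. (max (- g \<tau>) 0 / f \<tau>) powr (2/q))"
    by (rule continuous_on_powr'[OF _ continuous_on_const]) (use f_pos q_pos in \<open>auto simp: less_imp_le\<close>)
  thus ?thesis unfolding hh_def by (rule continuous_on_mult[OF _ fc])
qed

lemma hh_nonneg: "0 \<le> hh \<tau>"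
  using f_pos[of \<tau>] by (simp add: hh_def)

lemma hh_zero: "0 \<le> g \<tau> \<Longrightarrow> hh \<tau> = 0"
  by (simp add: hh_def)

lemma hh_alt: "hh \<tau> = max (- g \<tau>) 0 powr (2/q) * f \<tau> powr (1 - 2/q)"
proof -
  have fp: "0 < f \<tau>" by (rule f_pos)
  have "hh \<tau> = max (- g \<tau>) 0 powr (2/q) / f \<tau> powr (2/q) * f \<tau> powr 1"
    unfolding hh_def using fp by (simp add: powr_divide)
  also have "\<dots> = max (- g \<tau>) 0 powr (2/q) * (f \<tau> powr 1 / f \<tau> powr (2/q))" by simp
  also have "f \<tau> powr 1 / f \<tau> powr (2/q) = f \<tau> powr (1 - 2/q)" by (simp add: powr_diff)
  finally show ?thesis .
qed

lemma hh_anti: assumes "s \<le> t" shows "hh t \<le> hh s"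
proof -
  have "g s \<le> g t" using g_mono assms by (simp add: mono_def)
  hence g: "max (- g t) 0 \<le> max (- g s) 0" by simp
  have f: "f s \<le> f t" using f_mono assms by (auto simp: mono_def)
  have A: "max (- g t) 0 powr (2/q) \<le> max (- g s) 0 powr (2/q)"
    using g q_pos by (intro powr_mono2) auto
  have B: "f t powr (1 - 2/q) \<le> f s powr (1 - 2/q)"
    using f f_pos q_pos q_le by (intro powr_mono2') (auto simp: field_simps)
  show ?thesis unfolding hh_alt using A B by (intro mult_mono) auto
qed

definition P where "P t = integral {a..t} hh"
definition E3 where "E3 t = integral {a..t} (\<lambda>s. exp (2 * P s) * f s)"
definition K where "K t = exp (-2 * P t) * E3 t"

lemma P_cont: "continuous_on {a..b} P" unfolding P_def by (rule IH_cont[OF hh_c])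
lemma P_nonneg: "0 \<le> P t" unfolding P_def by (rule IH_nonneg[OF hh_c, of _ t]) (auto simp: hh_nonneg)
lemma P_mono: "a \<le> s \<Longrightarrow> s \<le> t \<Longrightarrow> P s \<le> P t" unfolding P_def by (rule IH_mono[OF hh_c]) (auto simp: hh_nonneg)
lemma P_split: "a \<le> s \<Longrightarrow> s \<le> t \<Longrightarrow> integral {s..t} hh = P t - P s"
  unfolding P_def by (rule IH_split[OF hh_c]) auto

lemma E3c: "continuous_on {a..b} (\<lambda>s. exp (2 * P s) * f s)"
  by (intro continuous_intros P_cont fc)

lemma K_cont: "continuous_on {a..b} K"
  unfolding K_def E3_def by (intro continuous_intros P_cont IH_cont[OF E3c])

lemma K_a: "K a = 0" by (simp add: K_def E3_def)

lemma K_lower: assumes t: "a \<le> t" "t \<le> b" shows "exp (-2 * P b) * f a * (t - a) \<le> K t"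
proof -
  have E: "f a * (t - a) \<le> E3 t" unfolding E3_def
  proof (rule IH_lower[OF E3c])
    fix x assume x: "a \<le> x" "x \<le> t"
    have "1 \<le> exp (2 * P x)" using P_nonneg[of x] by simp
    moreover have "f a \<le> f x" using f_mono x by (auto simp: mono_def)
    ultimately have "1 * f a \<le> exp (2 * P x) * f x"
      using f_pos[of a] by (intro mult_mono) auto
    thus "f a \<le> exp (2 * P x) * f x" by simp
  qed (use t in auto)
  have "exp (-2 * P b) \<le> exp (-2 * P t)" using P_mono[of t b] t by simp
  hence "exp (-2 * P b) * (f a * (t - a)) \<le> exp (-2 * P t) * E3 t"
    using E f_pos[of a] t by (intro mult_mono) auto
  thus ?thesis by (simp add: K_def mult.assoc)
qed

lemma K_pos: assumes "a < t" shows "0 < K t"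
proof -
  have "exp (-2 * P t) * f a * (t - a) \<le> K t" by (rule K_lower) (use assms in auto)
  moreover have "0 < exp (-2 * P t) * f a * (t - a)" using assms f_pos by simp
  ultimately show ?thesis by simp
qed

lemma K_nonneg: assumes "a \<le> t" shows "0 \<le> K t"
  using K_pos[of t] assms K_a by (cases "a = t") auto

lemma K_deriv:
  assumes u: "0 < u" "u < r1" "r1 < R"
  shows "((\<lambda>x. K (\<phi> x)) has_real_derivative (f (\<phi> u) - 2 * hh (\<phi> u) * K (\<phi> u)) * p u) (at u)"
proof -
  have d1: "((\<lambda>x. P (\<phi> x)) has_real_derivative hh (\<phi> u) * p u) (at u)"
    using comp_deriv[OF hh_c u] by (simp add: P_def)
  have d2: "((\<lambda>x. E3 (\<phi> x)) has_real_derivative exp (2 * P (\<phi> u)) * f (\<phi> u) * p u) (at u)"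
    using comp_deriv[OF E3c u] by (simp add: E3_def)
  have dexp: "((\<lambda>x. exp (-2 * P (\<phi> x))) has_real_derivative exp (-2 * P (\<phi> u)) * (-2 * (hh (\<phi> u) * p u))) (at u)"
    using DERIV_chain2[OF DERIV_exp DERIV_cmult[OF d1, of "-2"]] by simp
  have e: "exp (-2 * P (\<phi> u)) * exp (2 * P (\<phi> u)) = 1" by (simp add: exp_add[symmetric])
  have "((\<lambda>x. K (\<phi> x)) has_real_derivative
      exp (-2 * P (\<phi> u)) * (-2 * (hh (\<phi> u) * p u)) * E3 (\<phi> u) + exp (-2 * P (\<phi> u)) * (exp (2 * P (\<phi> u)) * f (\<phi> u) * p u)) (at u)"
    using DERIV_mult[OF dexp d2] by (simp add: K_def mult_ac)
  moreover have "exp (-2 * P (\<phi> u)) * (-2 * (hh (\<phi> u) * p u)) * E3 (\<phi> u) + exp (-2 * P (\<phi> u)) * (exp (2 * P (\<phi> u)) * f (\<phi> u) * p u)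
      = (f (\<phi> u) - 2 * hh (\<phi> u) * K (\<phi> u)) * p u"
  proof -
    have "exp (-2 * P (\<phi> u)) * (exp (2 * P (\<phi> u)) * f (\<phi> u) * p u) = (exp (-2 * P (\<phi> u)) * exp (2 * P (\<phi> u))) * f (\<phi> u) * p u"
      by (simp add: mult.assoc)
    also have "\<dots> = f (\<phi> u) * p u" using e by simp
    finally show ?thesis by (simp add: K_def algebra_simps)
  qed
  ultimately show ?thesis by simp
qed

lemma K_key: assumes t: "a \<le> t" shows "2 * hh t * K t \<le> f t"
proof -
  have ec: "continuous_on {a..t} (\<lambda>s. exp (2 * P s))" by (intro continuous_intros P_cont)
  have int1: "(\<lambda>s. exp (2 * P s)) integrable_on {a..t}" by (rule integrable_continuous_real[OF ec])
  define J where "J = integral {a..t} (\<lambda>s. exp (2 * P s))"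
  have I1: "E3 t \<le> f t * J"
  proof -
    have "E3 t \<le> integral {a..t} (\<lambda>s. f t * exp (2 * P s))" unfolding E3_def
    proof (rule integral_le)
      show "(\<lambda>s. exp (2 * P s) * f s) integrable_on {a..t}" by (rule integrable_continuous_real[OF E3c])
      show "(\<lambda>s. f t * exp (2 * P s)) integrable_on {a..t}"
        by (rule integrable_continuous_real) (intro continuous_intros P_cont)
      fix s assume "s \<in> {a..t}"
      hence "f s \<le> f t" using f_mono by (auto simp: mono_def)
      thus "exp (2 * P s) * f s \<le> f t * exp (2 * P s)" by (simp add: mult.commute)
    qed
    thus ?thesis by (simp add: integral_cmult_real J_def)
  qed
  have I2: "hh t * J \<le> integral {a..t} (\<lambda>s. hh s * exp (2 * P s))"
  proof -
    have "integral {a..t} (\<lambda>s. hh t * exp (2 * P s)) \<le> integral {a..t} (\<lambda>s. hh s * exp (2 * P s))"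
    proof (rule integral_le)
      show "(\<lambda>s. hh t * exp (2 * P s)) integrable_on {a..t}"
        by (rule integrable_continuous_real) (intro continuous_intros P_cont)
      show "(\<lambda>s. hh s * exp (2 * P s)) integrable_on {a..t}"
        by (rule integrable_continuous_real) (intro continuous_intros P_cont hh_c)
      fix s assume "s \<in> {a..t}"
      thus "hh t * exp (2 * P s) \<le> hh s * exp (2 * P s)" using hh_anti[of s t] by simp
    qed
    thus ?thesis by (simp add: integral_cmult_real J_def)
  qed
  have I3: "integral {a..t} (\<lambda>s. hh s * exp (2 * P s)) = (exp (2 * P t) - 1) / 2"
  proof -
    have "((\<lambda>s. hh s * exp (2 * P s)) has_integral (exp (2 * P t) / 2 - exp (2 * P a) / 2)) {a..t}"
    proof (rule fundamental_theorem_of_calculus[OF t])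
      fix x assume x: "x \<in> {a..t}"
      have "(P has_real_derivative hh x) (at x within {a..t})"
        unfolding P_def by (rule integral_has_real_derivative[OF hh_c x])
      hence "((\<lambda>s. exp (2 * P s) / 2) has_real_derivative exp (2 * P x) * (2 * hh x) / 2) (at x within {a..t})"
        by (auto intro!: derivative_eq_intros)
      thus "((\<lambda>s. exp (2 * P s) / 2) has_vector_derivative hh x * exp (2 * P x)) (at x within {a..t})"
        by (simp add: has_real_derivative_iff_has_vector_derivative[symmetric] algebra_simps)
    qed
    moreover have "P a = 0" by (simp add: P_def)
    ultimately show ?thesis by (simp add: integral_unique diff_divide_distrib)
  qed
  have J0: "0 \<le> J" unfolding J_def by (rule integral_nonneg[OF int1]) simp
  have "2 * hh t * K t = 2 * hh t * exp (-2 * P t) * E3 t" by (simp add: K_def)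
  also have "\<dots> \<le> 2 * hh t * exp (-2 * P t) * (f t * J)"
    using I1 hh_nonneg by (intro mult_left_mono) auto
  also have "\<dots> = 2 * exp (-2 * P t) * f t * (hh t * J)" by (simp add: algebra_simps)
  also have "\<dots> \<le> 2 * exp (-2 * P t) * f t * ((exp (2 * P t) - 1) / 2)"
    using I2 I3 f_pos[of t] by (intro mult_left_mono) auto
  also have "\<dots> = f t * (exp (-2 * P t) * exp (2 * P t)) - f t * exp (-2 * P t)" by (simp add: field_simps)
  also have "\<dots> = f t - f t * exp (-2 * P t)" by (simp add: exp_add[symmetric])
  also have "\<dots> \<le> f t" using f_pos[of t] by simp
  finally show ?thesis .
qed

end

context odes begin

lemma bad_bound: assumes u: "0 < u" "u < R" and gneg: "g (\<phi> u) < 0"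
  shows "p u \<le> u * f (\<phi> u) / c"
proof -
  define F where "F = f (\<phi> u)"
  define D where "D v = pt v - v * F / c" for v
  have "D u \<le> 0"
  proof (rule sign_le[where D=D and D'="\<lambda>v. pp v - F / c"])
    show "continuous_on {0..u} D" unfolding D_def using c1 by (intro continuous_intros pt_cont[OF u]) auto
    show "D 0 \<le> 0" by (simp add: D_def pt_def)
    fix v assume v: "0 < v" "v < u"
    have vR: "v < R" using v u by simp
    show "(D has_real_derivative pp v - F / c) (at v)" unfolding D_def
      using dpt[OF v(1) vR] c1 by (auto intro!: derivative_eq_intros)
    assume "0 < D v"
    hence big: "v * F / c \<le> p v" using v by (simp add: D_def pt_def)
    have "(c - 1) * (v * F / c) \<le> (c - 1) * p v" using big c1 by (intro mult_left_mono) auto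
    hence "(c - 1) * F / c \<le> (c - 1) / v * p v" using v by (simp add: field_simps)
    moreover have "pp v = RHS v - (c-1)/v * p v" by (rule ode'[OF v(1) vR])
    moreover have "RHS v \<le> F"
    proof -
      have "g (\<phi> v) \<le> g (\<phi> u)" using gphi_mono[of v u] v u by simp
      hence "g (\<phi> v) * p v powr q \<le> 0" using gneg by (simp add: mult_nonpos_nonneg)
      moreover have "f (\<phi> v) \<le> F" using fphi_mono[of v u] v u by (simp add: F_def)
      ultimately show ?thesis by (simp add: RHS_def)
    qed
    ultimately have "pp v \<le> F - (c - 1) * F / c" by simp
    also have "\<dots> = F / c" using c1 by (simp add: field_simps)
    finally show "pp v - F / c \<le> 0" by simp
  qed (use u in simp)
  thus ?thesis using u by (simp add: D_def pt_def F_def)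
qed

lemma powq: "0 < x \<Longrightarrow> (x^2) powr (q/2) = x powr q"
proof -
  assume x: "0 < x"
  have "(x^2) powr (q/2) = (x powr 2) powr (q/2)" using x by (simp add: powr2)
  also have "\<dots> = x powr q" by (simp add: powr_powr)
  finally show ?thesis .
qed

lemma part3: assumes r: "0 < r" "r < R"
  shows "min (q/c) (2 * c powr (-2/q)) * K (\<phi> r) \<le> (p r)^2"
proof -
  define \<Lambda> where "\<Lambda> = min (q/c) (2 * c powr (-2/q))"
  define C where "C = c powr (2/q - 1)"
  have Lq: "\<Lambda> \<le> q / c" by (simp add: \<Lambda>_def)
  have L2: "\<Lambda> \<le> 2 / c" using Lq q_le c1 by (smt (verit) divide_right_mono)
  have L0: "0 \<le> \<Lambda>" using q_pos c1 by (simp add: \<Lambda>_def)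
  define D where "D u = (pt u)^2 - \<Lambda> * K (\<phi> u)" for u
  have "D r \<ge> 0"
  proof (rule sign_ge[where D=D and D'="\<lambda>u. 2 * pt u * pp u - \<Lambda> * ((f (\<phi> u) - 2 * hh (\<phi> u) * K (\<phi> u)) * p u)"])
    show "continuous_on {0..r} D" unfolding D_def
      by (intro continuous_intros pt_cont[OF r] comp_cont[OF K_cont r(2)])
    show "0 \<le> D 0" by (simp add: D_def pt_def phi0 K_a)
    fix u assume u: "0 < u" "u < r"
    have uR: "u < R" using u r by simp
    have dsq: "((\<lambda>x. (pt x)^2) has_real_derivative 2 * pt u * pp u) (at u)"
      using DERIV_power[OF dpt[OF u(1) uR], of 2] by (simp add: algebra_simps)
    show "(D has_real_derivative 2 * pt u * pp u - \<Lambda> * ((f (\<phi> u) - 2 * hh (\<phi> u) * K (\<phi> u)) * p u)) (at u)"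
      unfolding D_def using DERIV_diff[OF dsq DERIV_cmult[OF K_deriv[OF u r(2)], of \<Lambda>]] by simp
    assume Dneg: "D u < 0"
    have pu: "pt u = p u" using u by (simp add: pt_def)
    have pos: "0 < p u" by (rule p_pos[OF u(1) uR])
    define F where "F = f (\<phi> u)"
    define Ku where "Ku = K (\<phi> u)"
    define hu where "hu = hh (\<phi> u)"
    have Fp: "0 < F" by (simp add: F_def f_pos)
    have au: "a \<le> \<phi> u" using phi_ge[of u] u uR by simp
    have Ku0: "0 \<le> Ku" using K_nonneg[OF au] by (simp add: Ku_def)
    have hu0: "0 \<le> hu" by (simp add: hu_def hh_nonneg)
    have key: "2 * (hu * Ku) \<le> F" using K_key[OF au] by (simp add: hu_def Ku_def F_def)
    show "0 \<le> 2 * pt u * pp u - \<Lambda> * ((f (\<phi> u) - 2 * hh (\<phi> u) * K (\<phi> u)) * p u)"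
    proof (cases "0 \<le> g (\<phi> u)")
      case True
      have h0: "hu = 0" using hh_zero[OF True] by (simp add: hu_def)
      have "RHS u / c \<le> pp u" by (rule good(2)[OF u(1) uR True])
      moreover have "F \<le> RHS u" using True by (simp add: RHS_def F_def)
      ultimately have "F / c \<le> pp u" using c1 by (smt (verit) divide_right_mono)
      hence "2 * p u * (F / c) \<le> 2 * p u * pp u" using pos by (intro mult_left_mono) auto
      moreover have "\<Lambda> * (F * p u) \<le> (2 / c) * (F * p u)" using L2 Fp pos by (intro mult_right_mono) auto
      ultimately show ?thesis using h0 pu by (simp add: F_def hu_def field_simps)
    next
      case False
      define gm where "gm = max (- g (\<phi> u)) 0"
      have gm: "gm = - g (\<phi> u)" "0 \<le> gm" using False by (auto simp: gm_def)
      have hu_def': "hu = (gm / F) powr (2/q) * F" by (simp add: hu_def hh_def gm_def F_def)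
      have pb: "p u \<le> u * F / c" using bad_bound[OF u(1) uR] False by (simp add: F_def)
      have "(c - 1) / u * p u \<le> (c - 1) / u * (u * F / c)" using pb c1 u by (intro mult_left_mono) auto
      hence cterm: "(c - 1) / u * p u \<le> (c - 1) * F / c" using u by simp
      have "pp u = F - gm * p u powr q - (c - 1) / u * p u"
        using ode'[OF u(1) uR] gm by (simp add: RHS_def F_def)
      hence pp1: "F - gm * p u powr q - (c - 1) * F / c \<le> pp u" using cterm by simp
      have Y: "gm * ((p u)^2) powr (q/2) \<le> (q/2) * C * hu * (p u)^2 + ((2-q)/(2*c)) * F"
        unfolding hu_def' C_def by (rule young_q[OF q_pos q_le c1 gm(2) Fp]) simp
      hence Y': "gm * p u powr q \<le> (q/2) * C * hu * (p u)^2 + ((2-q)/(2*c)) * F"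
        using powq[OF pos] by simp
      have "F - (c - 1) * F / c - ((2-q)/(2*c)) * F = (q / (2*c)) * F" using c1 by (simp add: field_simps)
      hence pp2: "(q / (2*c)) * F - (q/2) * C * hu * (p u)^2 \<le> pp u" using pp1 Y' by linarith
      have coefq: "0 \<le> (q/c - \<Lambda>) * F + \<Lambda> * (hu * Ku) * (2 - q * C)"
        unfolding \<Lambda>_def C_def by (rule coef[OF q_pos q_le c1 _ key]) (use hu0 Ku0 in simp)
      have Dw: "(p u)^2 - \<Lambda> * Ku < 0" using Dneg by (simp add: D_def pu Ku_def)
      have C0: "0 \<le> C" by (simp add: C_def)
      have t3: "0 \<le> - (q * C * hu * ((p u)^2 - \<Lambda> * Ku))"
        using Dw C0 hu0 q_pos by (simp add: mult_nonneg_nonpos)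
      have brk: "0 \<le> (q/c) * F - q * C * hu * (p u)^2 - \<Lambda> * F + 2 * \<Lambda> * hu * Ku"
      proof -
        have "(q/c) * F - q * C * hu * (p u)^2 - \<Lambda> * F + 2 * \<Lambda> * hu * Ku
            = ((q/c - \<Lambda>) * F + \<Lambda> * (hu * Ku) * (2 - q * C)) + (- (q * C * hu * ((p u)^2 - \<Lambda> * Ku)))"
          by (simp add: algebra_simps)
        thus ?thesis using coefq t3 by simp
      qed
      have "p u * ((q/c) * F - q * C * hu * (p u)^2 - \<Lambda> * F + 2 * \<Lambda> * hu * Ku) \<le>
            p u * (2 * pp u - \<Lambda> * F + 2 * \<Lambda> * hu * Ku)"
      proof (intro mult_left_mono)
        show "(q/c) * F - q * C * hu * (p u)^2 - \<Lambda> * F + 2 * \<Lambda> * hu * Ku \<le> 2 * pp u - \<Lambda> * F + 2 * \<Lambda> * hu * Ku"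
          using pp2 by (simp add: field_simps)
      qed (use pos in simp)
      moreover have "0 \<le> p u * ((q/c) * F - q * C * hu * (p u)^2 - \<Lambda> * F + 2 * \<Lambda> * hu * Ku)"
        using pos brk by simp
      ultimately have "0 \<le> p u * (2 * pp u - \<Lambda> * F + 2 * \<Lambda> * hu * Ku)" by linarith
      thus ?thesis using pu by (simp add: F_def hu_def Ku_def algebra_simps)
    qed
  qed (use r in simp)
  thus ?thesis using r by (simp add: D_def pt_def \<Lambda>_def)
qed

lemma part4: assumes gneg: "\<And>t. g t \<le> 0" and r: "0 < r" "r < R"
  shows "(p r)^2 \<le> 2 * K (\<phi> r)"
proof -
  define D where "D u = (pt u)^2 - 2 * K (\<phi> u)" for u
  have "D r \<le> 0"
  proof (rule sign_le[where D=D and D'="\<lambda>u. 2 * pt u * pp u - 2 * ((f (\<phi> u) - 2 * hh (\<phi> u) * K (\<phi> u)) * p u)"])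
    show "continuous_on {0..r} D" unfolding D_def
      by (intro continuous_intros pt_cont[OF r] comp_cont[OF K_cont r(2)])
    show "D 0 \<le> 0" by (simp add: D_def pt_def phi0 K_a)
    fix u assume u: "0 < u" "u < r"
    have uR: "u < R" using u r by simp
    have dsq: "((\<lambda>x. (pt x)^2) has_real_derivative 2 * pt u * pp u) (at u)"
      using DERIV_power[OF dpt[OF u(1) uR], of 2] by (simp add: algebra_simps)
    show "(D has_real_derivative 2 * pt u * pp u - 2 * ((f (\<phi> u) - 2 * hh (\<phi> u) * K (\<phi> u)) * p u)) (at u)"
      unfolding D_def using DERIV_diff[OF dsq DERIV_cmult[OF K_deriv[OF u r(2)], of 2]] by simp
    assume Dpos: "0 < D u"
    have pu: "pt u = p u" using u by (simp add: pt_def)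
    have pos: "0 < p u" by (rule p_pos[OF u(1) uR])
    define F where "F = f (\<phi> u)"
    define Ku where "Ku = K (\<phi> u)"
    define hu where "hu = hh (\<phi> u)"
    define gm where "gm = max (- g (\<phi> u)) 0"
    have gm: "gm = - g (\<phi> u)" "0 \<le> gm" using gneg[of "\<phi> u"] by (auto simp: gm_def)
    have Fp: "0 < F" by (simp add: F_def f_pos)
    have au: "a \<le> \<phi> u" using phi_ge[of u] u uR by simp
    have Ku0: "0 \<le> Ku" using K_nonneg[OF au] by (simp add: Ku_def)
    have key: "2 * hu * Ku \<le> F" using K_key[OF au] by (simp add: hu_def Ku_def F_def)
    have hu_def': "hu = (gm / F) powr (2/q) * F" by (simp add: hu_def hh_def gm_def F_def)
    have ppu: "pp u \<le> F - gm * p u powr q"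
    proof -
      have "pp u = RHS u - (c-1)/u * p u" by (rule ode'[OF u(1) uR])
      moreover have "0 \<le> (c-1)/u * p u" using c1 u pos by simp
      ultimately show ?thesis using gm by (simp add: RHS_def F_def)
    qed
    have wx: "2 * Ku \<le> (p u)^2" using Dpos by (simp add: D_def pu Ku_def)
    have "(gm / F) powr (2/q) * F * (2 * Ku) \<le> gm * ((p u)^2) powr (q/2)"
      by (rule alg4[OF q_pos q_le gm(2) Fp _ wx]) (use Ku0 key hu_def' in \<open>auto simp: algebra_simps\<close>)
    hence A: "2 * hu * Ku \<le> gm * p u powr q" using powq[OF pos] hu_def' by (simp add: algebra_simps)
    have "pp u - F + 2 * hu * Ku \<le> 0" using ppu A by simp
    hence "p u * (pp u - F + 2 * hu * Ku) \<le> 0" using pos by (simp add: mult_nonneg_nonpos)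
    thus "2 * pt u * pp u - 2 * ((f (\<phi> u) - 2 * hh (\<phi> u) * K (\<phi> u)) * p u) \<le> 0"
      using pu by (simp add: F_def hu_def Ku_def algebra_simps)
  qed (use r in simp)
  thus ?thesis using r by (simp add: D_def pt_def)
qed

end

context odes begin

lemma inner3: assumes t: "a \<le> t"
  shows "oint a t (\<lambda>s. exp (- 2 * oint s t (\<lambda>\<tau>. (max (- g \<tau>) 0 / f \<tau>) powr (2 / q) * f \<tau>)) * f s) = K t"
proof -
  have hh_eq: "(\<lambda>\<tau>. (max (- g \<tau>) 0 / f \<tau>) powr (2 / q) * f \<tau>) = hh" by (rule ext) (simp add: hh_def)
  have "oint a t (\<lambda>s. exp (- 2 * oint s t hh) * f s)
      = integral {a..t} (\<lambda>s. exp (-2 * P t) * (exp (2 * P s) * f s))"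
  proof (simp only: oint_eq[OF t], rule integral_cong)
    fix s assume s: "s \<in> {a..t}"
    have "oint s t hh = P t - P s" using s by (simp add: oint_eq P_split)
    moreover have "exp (- 2 * (P t - P s)) = exp (-2 * P t) * exp (2 * P s)"
      by (simp add: exp_add[symmetric] algebra_simps)
    ultimately show "exp (- 2 * oint s t hh) * f s = exp (-2 * P t) * (exp (2 * P s) * f s)"
      by simp
  qed
  thus ?thesis unfolding hh_eq by (simp add: integral_cmult_real E3_def K_def)
qed

lemma part3_final: assumes r: "0 < r" "r < R"
  shows "r \<le> c powr (1 / q) / sqrt q *
          oint a (\<phi> r) (\<lambda>t. 1 / sqrt (oint a t (\<lambda>s.
             exp (- 2 * oint s t (\<lambda>\<tau>. (max (- g \<tau>) 0 / f \<tau>) powr (2 / q) * f \<tau>)) * f s)))"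
proof -
  define b where "b = \<phi> r"
  have ab: "a < b" using b_gt[OF r] by (simp add: b_def)
  have phid: "(\<phi> has_real_derivative p s) (at s)" if "0 < s" "s < r" for s using dphi that r by simp
  have phir: "a < \<phi> s \<and> \<phi> s < \<phi> r" if "0 < s" "s < r" for s using phi_in[OF that r(2)] by simp
  define k where "k t = 1 / sqrt (K t)" for t
  have eq: "oint a b (\<lambda>t. 1 / sqrt (oint a t (\<lambda>s.
             exp (- 2 * oint s t (\<lambda>\<tau>. (max (- g \<tau>) 0 / f \<tau>) powr (2 / q) * f \<tau>)) * f s))) = integral {a..b} k"
    unfolding oint_eq[OF less_imp_le[OF ab]] k_def
    by (rule integral_cong) (subst inner3, auto)
  have Kc: "continuous_on {a<..\<phi> r} K" by (rule continuous_on_subset[OF K_cont]) auto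
  have kc: "continuous_on {a<..\<phi> r} k" unfolding k_def
  proof (intro continuous_on_divide continuous_on_const continuous_on_real_sqrt Kc ballI)
    fix t assume "t \<in> {a<..\<phi> r}"
    hence "0 < K t" by (intro K_pos) simp
    thus "sqrt (K t) \<noteq> 0" by simp
  qed
  have ki: "k integrable_on {a..\<phi> r}"
  proof (rule integrable_dom[OF _ kc])
    show "a \<le> \<phi> r" using ab by (simp add: b_def)
    fix t assume t: "a < t" "t \<le> \<phi> r"
    have kp: "0 < exp (-2 * P (\<phi> r)) * f a" using f_pos by simp
    have "k t \<le> (1 / sqrt (exp (-2 * P (\<phi> r)) * f a)) / sqrt (t - a)" unfolding k_def
      by (rule inv_sqrt_bound[OF kp t(1) K_lower]) (use t in auto)
    thus "0 \<le> k t \<and> k t \<le> (1 / sqrt (exp (-2 * P (\<phi> r)) * f a)) / sqrt (t - a)"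
      using K_pos[OF t(1)] by (simp add: k_def)
  qed
  define e where "e = c powr (-2/q)"
  have ep: "0 < e" using c1 by (simp add: e_def)
  have e_le: "e \<le> 1 / c"
  proof -
    have m: "-2/q \<le> (-1::real)" using q_pos q_le by (simp add: field_simps)
    have "e \<le> c powr (-1)" unfolding e_def using powr_mono[OF m c1] .
    thus ?thesis using c1 by (simp add: powr_minus_divide)
  qed
  have Lge: "q * e \<le> min (q/c) (2 * c powr (-2/q))"
  proof -
    have "q * e \<le> q * (1/c)" using e_le q_pos by (intro mult_left_mono) auto
    moreover have "q * e \<le> 2 * e" using q_le ep by simp
    ultimately show ?thesis by (simp add: e_def)
  qed
  have sq: "sqrt e = c powr (-1/q)"
  proof -
    have "sqrt e = e powr (1/2)" using ep by (simp add: powr_half_sqrt)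
    also have "\<dots> = c powr (-2/q * (1/2))" unfolding e_def by (rule powr_powr)
    finally show ?thesis by simp
  qed
  have "sqrt q * sqrt e * r \<le> integral {a..\<phi> r} k"
  proof (rule int_upper[OF r(1) phi_cont[OF r(2)] phi0 phid phir kc ki])
    fix s assume s: "0 < s" "s < r"
    have sR: "s < R" using s r by simp
    have ps: "0 < p s" by (rule p_pos[OF s(1) sR])
    have Ks: "0 < K (\<phi> s)" using K_pos phir[OF s] by simp
    have "q * e * K (\<phi> s) \<le> min (q/c) (2 * c powr (-2/q)) * K (\<phi> s)"
      using Lge Ks by (intro mult_right_mono) auto
    also have "\<dots> \<le> (p s)^2" by (rule part3[OF s(1) sR])
    finally have "sqrt (q * e * K (\<phi> s)) \<le> sqrt ((p s)^2)" by (rule real_sqrt_le_mono)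
    hence "sqrt q * sqrt e * sqrt (K (\<phi> s)) \<le> p s" using ps by (simp add: real_sqrt_mult)
    hence "sqrt q * sqrt e \<le> p s / sqrt (K (\<phi> s))" using Ks by (simp add: pos_le_divide_eq)
    thus "sqrt q * sqrt e \<le> p s * k (\<phi> s)" by (simp add: k_def)
  qed
  moreover have mp: "0 < sqrt q * sqrt e" using ep q_pos by simp
  ultimately have "r \<le> integral {a..b} k / (sqrt q * sqrt e)"
    by (simp add: b_def pos_le_divide_eq mult.commute)
  also have "sqrt e = 1 / c powr (1/q)" using sq by (simp add: powr_minus_divide)
  hence "integral {a..b} k / (sqrt q * sqrt e) = c powr (1 / q) / sqrt q * integral {a..b} k"
    by simp
  finally have "r \<le> c powr (1 / q) / sqrt q * integral {a..b} k" .
  thus ?thesis using eq by (simp add: b_def)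
qed

lemma part4_final: assumes gneg: "\<forall>t. g t \<le> 0" and r: "0 < r" "r < R"
  shows "1 / sqrt 2 *
          oint a (\<phi> r) (\<lambda>t. 1 / sqrt (oint a t (\<lambda>s.
             exp (- 2 * oint s t (\<lambda>\<tau>. (max (- g \<tau>) 0 / f \<tau>) powr (2 / q) * f \<tau>)) * f s))) \<le> r"
proof -
  define b where "b = \<phi> r"
  have ab: "a < b" using b_gt[OF r] by (simp add: b_def)
  have phid: "(\<phi> has_real_derivative p s) (at s)" if "0 < s" "s < r" for s using dphi that r by simp
  have phir: "a < \<phi> s \<and> \<phi> s < \<phi> r" if "0 < s" "s < r" for s using phi_in[OF that r(2)] by simp
  define k where "k t = 1 / sqrt (K t)" for t
  have eq: "oint a b (\<lambda>t. 1 / sqrt (oint a t (\<lambda>s.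
             exp (- 2 * oint s t (\<lambda>\<tau>. (max (- g \<tau>) 0 / f \<tau>) powr (2 / q) * f \<tau>)) * f s))) = integral {a..b} k"
    unfolding oint_eq[OF less_imp_le[OF ab]] k_def
    by (rule integral_cong) (subst inner3, auto)
  have Kc: "continuous_on {a<..\<phi> r} K" by (rule continuous_on_subset[OF K_cont]) auto
  have kc: "continuous_on {a<..\<phi> r} k" unfolding k_def
  proof (intro continuous_on_divide continuous_on_const continuous_on_real_sqrt Kc ballI)
    fix t assume "t \<in> {a<..\<phi> r}"
    hence "0 < K t" by (intro K_pos) simp
    thus "sqrt (K t) \<noteq> 0" by simp
  qed
  have "integral {a..\<phi> r} k \<le> sqrt 2 * r"
  proof (rule int_lower[OF r(1) phi_cont[OF r(2)] phi0 phid phir kc])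
    fix s assume s: "0 < s" "s < r"
    have sR: "s < R" using s r by simp
    have ps: "0 < p s" by (rule p_pos[OF s(1) sR])
    have Ks: "0 < K (\<phi> s)" using K_pos phir[OF s] by simp
    have "sqrt ((p s)^2) \<le> sqrt (2 * K (\<phi> s))"
      by (rule real_sqrt_le_mono[OF part4[OF _ s(1) sR]]) (use gneg in auto)
    hence "p s \<le> sqrt 2 * sqrt (K (\<phi> s))" using ps by (simp add: real_sqrt_mult)
    hence "p s / sqrt (K (\<phi> s)) \<le> sqrt 2" using Ks by (simp add: pos_divide_le_eq)
    thus "p s * k (\<phi> s) \<le> sqrt 2" by (simp add: k_def)
  next
    show "0 \<le> sqrt (2::real)" by (rule real_sqrt_ge_zero) simp
  qed
  hence "integral {a..b} k / sqrt 2 \<le> r" by (simp add: b_def pos_divide_le_eq mult.commute)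
  hence "1 / sqrt 2 * integral {a..b} k \<le> r" by simp
  thus ?thesis using eq by (simp add: b_def)
qed

end

theorem lemma2p3:
  fixes q c a R :: real and f g \<phi> :: "real \<Rightarrow> real"
  assumes q: "0 < q" "q \<le> 2"
    and c: "c \<ge> 1"
    and f_cont: "continuous_on UNIV f" and f_mono: "mono f" and f_pos: "\<And>x. f x > 0"
    and g_cont: "continuous_on UNIV g" and g_mono: "mono g"
    and R: "R > 0"
    and sol: "ode_solution q c f g a R \<phi>"
  shows
    "(\<forall>r\<in>{0..<R}. r \<ge>
        (if q < 2 then
           1 / 2 powr (2 / (2 - q)) *
             oint a (\<phi> r) (\<lambda>t. 1 / (sqrt (oint a t f) + (oint a t (\<lambda>s. max (g s) 0)) powr (1 / (2 - q))))
         else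
           oint a (\<phi> r) (\<lambda>t. 1 / sqrt (2 * oint a t (\<lambda>s. exp (2 * oint s t (\<lambda>\<rho>. max (g \<rho>) 0)) * f s)))))
     \<and> (g a \<ge> 0 \<longrightarrow> (\<forall>r\<in>{0..<R}. r \<le>
        (if q < 2 then
           2 * (c / (2 - q)) powr (1 / (2 - q)) *
             oint a (\<phi> r) (\<lambda>t. 1 / (sqrt (oint a t f) + (oint a t (\<lambda>s. max (g s) 0)) powr (1 / (2 - q))))
         else
           sqrt (c / 2) *
             oint a (\<phi> r) (\<lambda>t. 1 / sqrt (oint a t (\<lambda>s. exp (2 / c * oint s t (\<lambda>\<tau>. max (g \<tau>) 0)) * f s))))))
     \<and> (\<forall>r\<in>{0<..<R}. r \<le>
        c powr (1 / q) / sqrt q *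
          oint a (\<phi> r) (\<lambda>t. 1 / sqrt (oint a t (\<lambda>s.
             exp (- 2 * oint s t (\<lambda>\<tau>. (max (- g \<tau>) 0 / f \<tau>) powr (2 / q) * f \<tau>)) * f s))))
     \<and> ((\<forall>t. g t \<le> 0) \<longrightarrow> (\<forall>r\<in>{0<..<R}. r \<ge>
        1 / sqrt 2 *
          oint a (\<phi> r) (\<lambda>t. 1 / sqrt (oint a t (\<lambda>s.
             exp (- 2 * oint s t (\<lambda>\<tau>. (max (- g \<tau>) 0 / f \<tau>) powr (2 / q) * f \<tau>)) * f s)))))"
proof -
  from sol obtain p pp L where
    phic: "continuous_on {0..<R} \<phi>" and
    der: "\<forall>r\<in>{0<..<R}. (\<phi> has_real_derivative p r) (at r) \<and> (p has_real_derivative pp r) (at r)" and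
    ppc: "continuous_on {0<..<R} pp" and
    ode: "\<forall>r\<in>{0<..<R}. pp r + (c - 1) / r * p r = f (\<phi> r) + g (\<phi> r) * \<bar>p r\<bar> powr q" and
    phi0: "\<phi> 0 = a" and p0: "(p \<longlongrightarrow> 0) (at_right 0)" and ppL: "(pp \<longlongrightarrow> L) (at_right 0)"
    unfolding ode_solution_def by blast
  interpret odes q c a R L f g \<phi> p pp
  proof
    show "\<And>r. 0 < r \<Longrightarrow> r < R \<Longrightarrow> (\<phi> has_real_derivative p r) (at r)" using der by auto
    show "\<And>r. 0 < r \<Longrightarrow> r < R \<Longrightarrow> (p has_real_derivative pp r) (at r)" using der by auto
    show "\<And>r. 0 < r \<Longrightarrow> r < R \<Longrightarrow> pp r + (c-1)/r * p r = f (\<phi> r) + g (\<phi> r) * \<bar>p r\<bar> powr q"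
      using ode by auto
  qed (use assms phic ppc phi0 p0 ppL in auto)
  have P1: "(\<forall>r\<in>{0..<R}. r \<ge>
        (if q < 2 then
           1 / 2 powr (2 / (2 - q)) *
             oint a (\<phi> r) (\<lambda>t. 1 / (sqrt (oint a t f) + (oint a t (\<lambda>s. max (g s) 0)) powr (1 / (2 - q))))
         else
           oint a (\<phi> r) (\<lambda>t. 1 / sqrt (2 * oint a t (\<lambda>s. exp (2 * oint s t (\<lambda>\<rho>. max (g \<rho>) 0)) * f s)))))"
    by (intro ballI part1) auto
  have P2: "(g a \<ge> 0 \<longrightarrow> (\<forall>r\<in>{0..<R}. r \<le>
        (if q < 2 then
           2 * (c / (2 - q)) powr (1 / (2 - q)) *
             oint a (\<phi> r) (\<lambda>t. 1 / (sqrt (oint a t f) + (oint a t (\<lambda>s. max (g s) 0)) powr (1 / (2 - q))))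
         else
           sqrt (c / 2) *
             oint a (\<phi> r) (\<lambda>t. 1 / sqrt (oint a t (\<lambda>s. exp (2 / c * oint s t (\<lambda>\<tau>. max (g \<tau>) 0)) * f s))))))"
    by (intro impI ballI part2) auto
  have P3: "(\<forall>r\<in>{0<..<R}. r \<le>
        c powr (1 / q) / sqrt q *
          oint a (\<phi> r) (\<lambda>t. 1 / sqrt (oint a t (\<lambda>s.
             exp (- 2 * oint s t (\<lambda>\<tau>. (max (- g \<tau>) 0 / f \<tau>) powr (2 / q) * f \<tau>)) * f s))))"
    by (intro ballI part3_final) auto
  have P4: "((\<forall>t. g t \<le> 0) \<longrightarrow> (\<forall>r\<in>{0<..<R}. r \<ge>
        1 / sqrt 2 *
          oint a (\<phi> r) (\<lambda>t. 1 / sqrt (oint a t (\<lambda>s.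
             exp (- 2 * oint s t (\<lambda>\<tau>. (max (- g \<tau>) 0 / f \<tau>) powr (2 / q) * f \<tau>)) * f s)))))"
    by (intro impI ballI part4_final) auto
  show ?thesis using P1 P2 P3 P4 by blast
qed

end
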